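(* Let $n\ge 2$ and let $S$ be $\mathcal{PI}^{\ast}_n$ or $\overline{\mathcal{PI}^{\ast}}_n$. Up to equivalence, $S$ has exactly one faithful effective transitive representation, and it is a representation into $\mathcal{I}_{2^n-1}$ (i.e. the corresponding set of right cosets has $2^n-1$ elements). In particular, $\mathcal{PI}^{\ast}_n$ and $\overline{\mathcal{PI}^{\ast}}_n$ embed into the symmetric inverse semigroup $\mathcal{I}_{2^n-1}$.
   Context: Let $X=\{1,\dots,n\}$, $X'=\{1',\dots,n'\}$, and let $P_n$ be the set of partitions of $X\cup X'$ each of whose blocks is a singleton (point) or a generalised line (a set meeting both $X$ and $X'$). $\mathcal{PI}^{\ast}_n=(P_n,\star)$, where (with $X''$ a third copy of $X$, regarding $\alpha$ as a partition of $X\cup X''$ and $\beta$ of $X''\cup X'$, and $\sim$ the equivalence on $X\cup X''\cup X'$ generated by the blocks of both) $\alpha\star\beta$ is the partition of $X\cup X'$ in which distinct $u,v$ are in one block iff $u\sim v$ and the $\sim$-class of $u$ contains no singleton block of $\alpha$ or $\beta$. $\overline{\mathcal{PI}^{\ast}}_n=(P_n,\circ)$, where $\alpha\circ\beta$ has as generalised lines exactly the sets $A\cup D'$ with $A\cup B'$ a generalised line of $\alpha$ and $B\cup D'$ a generalised line of $\beta$ (same $B$), other elements being points. Both are inverse semigroups. For an inverse semigroup $S$: the natural partial order is $s\le t$ iff $s=et$ for some idempotent $e$; for $H\subseteq S$, $H\varrho=\{s\in S: s\ge h\text{ for some }h\in H\}$; a closed inverse subsemigroup is an inverse subsemigroup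 $H$ with $H\varrho=H$; $\mathcal{C}_H=\{(Hs)\varrho: ss^{-1}\in H\}$; the effective transitive representation $\phi_H:S\to\mathcal{I}_{\mathcal{C}_H}$ (symmetric inverse semigroup of partial bijections of $\mathcal{C}_H$) is $\phi_H(s)=\{((Hx)\varrho,(Hxs)\varrho): (Hx)\varrho,(Hxs)\varrho\in\mathcal{C}_H\}$; $\phi_H$ and $\phi_K$ are equivalent iff there is $a\in S$ with $a^{-1}Ha\subseteq K$ and $aKa^{-1}\subseteq H$. *)

theory Defs
  imports Main "HOL-Library.Disjoint_Sets"
begin

text \<open>Points of X \<union> X': (i, False) is i \<in> X, (i, True) is i' \<in> X'.
  An element of P_n is a partition, i.e. a set of blocks.\<close>

type_synonym pt = "nat \<times> bool"
type_synonym part = "pt set set"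

definition Xs :: "nat \<Rightarrow> pt set" where "Xs n = {1..n} \<times> {False}"
definition Xp :: "nat \<Rightarrow> pt set" where "Xp n = {1..n} \<times> {True}"

definition is_point :: "'a set \<Rightarrow> bool" where "is_point B \<longleftrightarrow> card B = 1"

definition is_gline :: "nat \<Rightarrow> pt set \<Rightarrow> bool" where
  "is_gline n B \<longleftrightarrow> B \<inter> Xs n \<noteq> {} \<and> B \<inter> Xp n \<noteq> {}"

definition Pn :: "nat \<Rightarrow> part set" where
  "Pn n = {P. partition_on (Xs n \<union> Xp n) P \<and> (\<forall>B\<in>P. is_point B \<or> is_gline n B)}"

text \<open>Three copies X (tag 0), X'' (tag 1), X' (tag 2).\<close>
definition embL :: "part \<Rightarrow> (nat \<times> nat) set set" where
  "embL \<alpha> = (\<lambda>B. (\<lambda>(i,b). (i, if b then 1 else 0)) ` B) ` \<alpha>"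
definition embR :: "part \<Rightarrow> (nat \<times> nat) set set" where
  "embR \<beta> = (\<lambda>B. (\<lambda>(i,b). (i, if b then 2 else 1)) ` B) ` \<beta>"

definition simrel :: "part \<Rightarrow> part \<Rightarrow> ((nat \<times> nat) \<times> (nat \<times> nat)) set" where
  "simrel \<alpha> \<beta> = ({(u,v). \<exists>B \<in> embL \<alpha> \<union> embR \<beta>. u \<in> B \<and> v \<in> B})\<^sup>*"

definition good :: "part \<Rightarrow> part \<Rightarrow> nat \<times> nat \<Rightarrow> bool" where
  "good \<alpha> \<beta> u \<longleftrightarrow> (\<forall>B \<in> embL \<alpha> \<union> embR \<beta>. is_point B \<longrightarrow> (\<forall>w\<in>B. (u,w) \<notin> simrel \<alpha> \<beta>))"

definition outpt :: "nat \<times> nat \<Rightarrow> pt" where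
  "outpt u = (fst u, snd u = 2)"

definition outset :: "nat \<Rightarrow> (nat \<times> nat) set" where
  "outset n = {1..n} \<times> {0, 2}"

definition PIstar :: "nat \<Rightarrow> part \<Rightarrow> part \<Rightarrow> part" where
  "PIstar n \<alpha> \<beta> =
     (\<lambda>u. outpt ` {v \<in> outset n. v = u \<or> ((u,v) \<in> simrel \<alpha> \<beta> \<and> good \<alpha> \<beta> u)}) ` outset n"

definition mkblk :: "nat set \<Rightarrow> nat set \<Rightarrow> pt set" where
  "mkblk A D = (A \<times> {False}) \<union> (D \<times> {True})"

definition topp :: "pt set \<Rightarrow> nat set" where "topp L = {i. (i, False) \<in> L}"
definition botp :: "pt set \<Rightarrow> nat set" where "botp L = {i. (i, True) \<in> L}"

definition lines_circ :: "nat \<Rightarrow> part \<Rightarrow> part \<Rightarrow> part" where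
  "lines_circ n \<alpha> \<beta> = {mkblk (topp La) (botp Lb) | La Lb.
      La \<in> \<alpha> \<and> is_gline n La \<and> Lb \<in> \<beta> \<and> is_gline n Lb \<and> botp La = topp Lb}"

definition PIbar :: "nat \<Rightarrow> part \<Rightarrow> part \<Rightarrow> part" where
  "PIbar n \<alpha> \<beta> = lines_circ n \<alpha> \<beta> \<union>
     {{x} | x. x \<in> Xs n \<union> Xp n \<and> x \<notin> \<Union>(lines_circ n \<alpha> \<beta>)}"

definition idem :: "'a set \<Rightarrow> ('a \<Rightarrow> 'a \<Rightarrow> 'a) \<Rightarrow> 'a \<Rightarrow> bool" where
  "idem S m e \<longleftrightarrow> e \<in> S \<and> m e e = e"

definition sinv :: "'a set \<Rightarrow> ('a \<Rightarrow> 'a \<Rightarrow> 'a) \<Rightarrow> 'a \<Rightarrow> 'a" where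
  "sinv S m s = (THE t. t \<in> S \<and> m (m s t) s = s \<and> m (m t s) t = t)"

definition nleq :: "'a set \<Rightarrow> ('a \<Rightarrow> 'a \<Rightarrow> 'a) \<Rightarrow> 'a \<Rightarrow> 'a \<Rightarrow> bool" where
  "nleq S m s t \<longleftrightarrow> (\<exists>e. idem S m e \<and> s = m e t)"

definition upc :: "'a set \<Rightarrow> ('a \<Rightarrow> 'a \<Rightarrow> 'a) \<Rightarrow> 'a set \<Rightarrow> 'a set" where
  "upc S m H = {s \<in> S. \<exists>h\<in>H. nleq S m h s}"

definition inv_subsemigroup :: "'a set \<Rightarrow> ('a \<Rightarrow> 'a \<Rightarrow> 'a) \<Rightarrow> 'a set \<Rightarrow> bool" where
  "inv_subsemigroup S m H \<longleftrightarrow> H \<noteq> {} \<and> H \<subseteq> S \<and> (\<forall>x\<in>H. \<forall>y\<in>H. m x y \<in> H)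
      \<and> (\<forall>x\<in>H. sinv S m x \<in> H)"

definition closed_inv_sub :: "'a set \<Rightarrow> ('a \<Rightarrow> 'a \<Rightarrow> 'a) \<Rightarrow> 'a set \<Rightarrow> bool" where
  "closed_inv_sub S m H \<longleftrightarrow> inv_subsemigroup S m H \<and> upc S m H = H"

definition rcoset :: "('a \<Rightarrow> 'a \<Rightarrow> 'a) \<Rightarrow> 'a set \<Rightarrow> 'a \<Rightarrow> 'a set" where
  "rcoset m H s = (\<lambda>h. m h s) ` H"

definition cosets :: "'a set \<Rightarrow> ('a \<Rightarrow> 'a \<Rightarrow> 'a) \<Rightarrow> 'a set \<Rightarrow> 'a set set" where
  "cosets S m H = {upc S m (rcoset m H s) | s. s \<in> S \<and> m s (sinv S m s) \<in> H}"

definition phi :: "'a set \<Rightarrow> ('a \<Rightarrow> 'a \<Rightarrow> 'a) \<Rightarrow> 'a set \<Rightarrow> 'a \<Rightarrow> ('a set \<times> 'a set) set" where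
  "phi S m H s = {(upc S m (rcoset m H x), upc S m (rcoset m H (m x s))) | x.
       x \<in> S \<and> upc S m (rcoset m H x) \<in> cosets S m H \<and> upc S m (rcoset m H (m x s)) \<in> cosets S m H}"

definition rep_equiv :: "'a set \<Rightarrow> ('a \<Rightarrow> 'a \<Rightarrow> 'a) \<Rightarrow> 'a set \<Rightarrow> 'a set \<Rightarrow> bool" where
  "rep_equiv S m H K \<longleftrightarrow> (\<exists>a\<in>S. (\<lambda>h. m (m (sinv S m a) h) a) ` H \<subseteq> K
                                  \<and> (\<lambda>k. m (m a k) (sinv S m a)) ` K \<subseteq> H)"

end

theory Submission
  imports Defs
begin


definition Qs :: "nat \<Rightarrow> nat set set" where
  "Qs n = {A. A \<noteq> {} \<and> A \<subseteq> {1..n}}"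

lemma card_Qs: "card (Qs n) = 2 ^ n - 1"
proof -
  have "Qs n = Pow {1..n} - {{}}" unfolding Qs_def by auto
  then show ?thesis by (simp add: card_Pow)
qed

lemma finite_Qs: "finite (Qs n)"
  unfolding Qs_def by (rule finite_subset[of _ "Pow {1..n}"]) auto

definition pinj :: "('a \<times> 'a) set \<Rightarrow> bool" where
  "pinj r \<longleftrightarrow> single_valued r \<and> single_valued (r\<inverse>)"

lemma pinjD1: "pinj r \<Longrightarrow> (a,b) \<in> r \<Longrightarrow> (a,c) \<in> r \<Longrightarrow> b = c"
  unfolding pinj_def single_valued_def by blast
lemma pinjD2: "pinj r \<Longrightarrow> (a,b) \<in> r \<Longrightarrow> (c,b) \<in> r \<Longrightarrow> a = c"
  unfolding pinj_def single_valued_def by blast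

lemma R1: "pinj r \<Longrightarrow> r O r\<inverse> = Id_on (Domain r)"
  by (auto dest: pinjD2)
lemma R2: "pinj r \<Longrightarrow> r O r\<inverse> O r = r"
  by (auto dest: pinjD2)
lemma R3: assumes "pinj r" "pinj g" "r O g O r = r" "g O r O g = g" shows "g = r\<inverse>"
proof
  show "r\<inverse> \<subseteq> g"
  proof
    fix p assume "p \<in> r\<inverse>"
    then obtain a b where p: "p = (b,a)" "(a,b) \<in> r" by auto
    then have "(a,b) \<in> r O g O r" using assms(3) by simp
    then obtain x y where "(a,x) \<in> r" "(x,y) \<in> g" "(y,b) \<in> r" by auto
    with p assms(1) show "p \<in> g" by (metis pinjD1 pinjD2)
  qed
  show "g \<subseteq> r\<inverse>"
  proof
    fix p assume "p \<in> g"
    then obtain a b where p: "p = (a,b)" "(a,b) \<in> g" by (cases p) auto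
    then have "(a,b) \<in> g O r O g" using assms(4) by simp
    then obtain x y where "(a,x) \<in> g" "(x,y) \<in> r" "(y,b) \<in> g" by auto
    with p assms(2) show "p \<in> r\<inverse>" by (metis pinjD1 pinjD2 converse_iff)
  qed
qed
lemma R4: "pinj r \<Longrightarrow> r O r = r \<longleftrightarrow> r \<subseteq> Id"
proof
  assume pr: "pinj r" and e: "r O r = r"
  show "r \<subseteq> Id"
  proof
    fix p assume "p \<in> r"
    then obtain a b where p: "p = (a,b)" "(a,b) \<in> r" by (cases p) auto
    then have "(a,b) \<in> r O r" using e by simp
    then obtain x where "(a,x) \<in> r" "(x,b) \<in> r" by auto
    with p pr have "x = b" by (metis pinjD1)
    with p pr \<open>(x,b) \<in> r\<close> show "p \<in> Id" by (metis pinjD2 IdI)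
  qed
next
  assume "r \<subseteq> Id" then show "r O r = r" by auto
qed
lemma R5: "h \<subseteq> s \<Longrightarrow> single_valued s \<Longrightarrow> Id_on (Domain h) O s = h"
  unfolding single_valued_def by auto

lemma pinj_O: "pinj r \<Longrightarrow> pinj s \<Longrightarrow> pinj (r O s)"
  unfolding pinj_def by (auto simp: converse_relcomp single_valued_relcomp)

locale PS =
  fixes n :: nat and mult :: "part \<Rightarrow> part \<Rightarrow> part" and Phi :: "part \<Rightarrow> (nat set \<times> nat set) set"
  assumes n2: "n \<ge> 2"
    and Phi_sub: "\<alpha> \<in> Pn n \<Longrightarrow> Phi \<alpha> \<subseteq> Qs n \<times> Qs n"
    and Phi_pinj: "\<alpha> \<in> Pn n \<Longrightarrow> pinj (Phi \<alpha>)"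
    and Phi_inj: "inj_on Phi (Pn n)"
    and mclosed: "\<alpha> \<in> Pn n \<Longrightarrow> \<beta> \<in> Pn n \<Longrightarrow> mult \<alpha> \<beta> \<in> Pn n"
    and hom: "\<alpha> \<in> Pn n \<Longrightarrow> \<beta> \<in> Pn n \<Longrightarrow> Phi (mult \<alpha> \<beta>) = Phi \<alpha> O Phi \<beta>"
    and trex: "\<alpha> \<in> Pn n \<Longrightarrow> \<exists>\<beta>\<in>Pn n. Phi \<beta> = (Phi \<alpha>)\<inverse>"
    and single: "A \<in> Qs n \<Longrightarrow> B \<in> Qs n \<Longrightarrow> \<exists>s\<in>Pn n. Phi s = {(A,B)}"
begin

abbreviation "P \<equiv> Pn n"

lemma Phi_eq: "a \<in> P \<Longrightarrow> b \<in> P \<Longrightarrow> Phi a = Phi b \<Longrightarrow> a = b"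
  using Phi_inj by (auto dest: inj_onD)

definition tr :: "part \<Rightarrow> part" where "tr a = (SOME b. b \<in> P \<and> Phi b = (Phi a)\<inverse>)"

lemma tr: assumes "a \<in> P" shows "tr a \<in> P" "Phi (tr a) = (Phi a)\<inverse>"
proof -
  have "\<exists>b. b \<in> P \<and> Phi b = (Phi a)\<inverse>" using trex[OF assms] by blast
  then have "tr a \<in> P \<and> Phi (tr a) = (Phi a)\<inverse>" unfolding tr_def by (rule someI_ex)
  then show "tr a \<in> P" "Phi (tr a) = (Phi a)\<inverse>" by auto
qed

definition sg :: "nat set \<Rightarrow> nat set \<Rightarrow> part" where "sg A B = (SOME s. s \<in> P \<and> Phi s = {(A,B)})"

lemma sg: assumes "A \<in> Qs n" "B \<in> Qs n" shows "sg A B \<in> P" "Phi (sg A B) = {(A,B)}"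
proof -
  have "\<exists>s. s \<in> P \<and> Phi s = {(A,B)}" using single[OF assms] by blast
  then have "sg A B \<in> P \<and> Phi (sg A B) = {(A,B)}" unfolding sg_def by (rule someI_ex)
  then show "sg A B \<in> P" "Phi (sg A B) = {(A,B)}" by auto
qed

lemma pinj_conv: "pinj r \<Longrightarrow> pinj (r\<inverse>)"
  unfolding pinj_def by simp

lemma sinv_eq: assumes a: "a \<in> P" shows "sinv P mult a = tr a"
  unfolding sinv_def
proof (rule the_equality)
  have t: "tr a \<in> P" "Phi (tr a) = (Phi a)\<inverse>" using tr[OF a] by auto
  have pa: "pinj (Phi a)" using Phi_pinj[OF a] .
  have 1: "mult (mult a (tr a)) a = a"
  proof (rule Phi_eq)
    show "mult (mult a (tr a)) a \<in> P" using a t by (intro mclosed)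
    have "Phi (mult (mult a (tr a)) a) = Phi a O (Phi a)\<inverse> O Phi a"
      using a t by (simp add: hom mclosed O_assoc)
    also have "\<dots> = Phi a" using R2[OF pa] .
    finally show "Phi (mult (mult a (tr a)) a) = Phi a" .
  qed (rule a)
  have 2: "mult (mult (tr a) a) (tr a) = tr a"
  proof (rule Phi_eq)
    show "mult (mult (tr a) a) (tr a) \<in> P" using a t by (intro mclosed)
    have "Phi (mult (mult (tr a) a) (tr a)) = (Phi a)\<inverse> O ((Phi a)\<inverse>)\<inverse> O (Phi a)\<inverse>"
      using a t by (simp add: hom mclosed O_assoc)
    also have "\<dots> = (Phi a)\<inverse>" using R2[OF pinj_conv[OF pa]] .
    finally show "Phi (mult (mult (tr a) a) (tr a)) = Phi (tr a)" using t by simp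
  qed (rule t)
  show "tr a \<in> P \<and> mult (mult a (tr a)) a = a \<and> mult (mult (tr a) a) (tr a) = tr a"
    using 1 2 t by auto
next
  fix t assume t: "t \<in> P \<and> mult (mult a t) a = a \<and> mult (mult t a) t = t"
  then have e1: "Phi a O Phi t O Phi a = Phi a" using a by (metis hom mclosed O_assoc)
  have e2: "Phi t O Phi a O Phi t = Phi t" using t a by (metis hom mclosed O_assoc)
  have "Phi t = (Phi a)\<inverse>" using R3[OF Phi_pinj[OF a] Phi_pinj e1 e2] t by blast
  then show "t = tr a" using tr[OF a] t by (intro Phi_eq) auto
qed

lemma idem_iff: assumes e: "e \<in> P" shows "idem P mult e \<longleftrightarrow> Phi e \<subseteq> Id"
proof -
  have "mult e e = e \<longleftrightarrow> Phi e O Phi e = Phi e"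
  proof
    assume "mult e e = e" then show "Phi e O Phi e = Phi e" using e by (metis hom)
  next
    assume "Phi e O Phi e = Phi e" then show "mult e e = e" using e
      by (intro Phi_eq) (auto simp: hom mclosed)
  qed
  then show ?thesis unfolding idem_def using e R4[OF Phi_pinj[OF e]] by auto
qed

lemma nleq_iff: assumes "s \<in> P" shows "nleq P mult h s \<longleftrightarrow> h \<in> P \<and> Phi h \<subseteq> Phi s"
proof
  assume "nleq P mult h s"
  then obtain e where e: "idem P mult e" "h = mult e s" unfolding nleq_def by auto
  then have eP: "e \<in> P" unfolding idem_def by auto
  then have "Phi e \<subseteq> Id" using idem_iff e by auto
  moreover have "Phi h = Phi e O Phi s" using e eP assms by (simp add: hom)
  ultimately show "h \<in> P \<and> Phi h \<subseteq> Phi s" using e eP assms mclosed by auto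
next
  assume h: "h \<in> P \<and> Phi h \<subseteq> Phi s"
  define e where "e = mult h (tr h)"
  have eP: "e \<in> P" using h tr e_def mclosed by auto
  have "Phi e = Phi h O (Phi h)\<inverse>" using h tr[of h] by (simp add: e_def hom)
  then have Pe: "Phi e = Id_on (Domain (Phi h))" using R1[OF Phi_pinj] h by simp
  have "idem P mult e" using eP Pe idem_iff by auto
  moreover have "h = mult e s"
  proof (rule Phi_eq)
    show "Phi h = Phi (mult e s)" using Pe eP assms h R5[of "Phi h" "Phi s"] Phi_pinj[OF assms]
      by (simp add: hom pinj_def)
  qed (use h eP assms mclosed in auto)
  ultimately show "nleq P mult h s" unfolding nleq_def by auto
qed

lemma upc_eq: "H \<subseteq> P \<Longrightarrow> upc P mult H = {s\<in>P. \<exists>h\<in>H. Phi h \<subseteq> Phi s}"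
  unfolding upc_def using nleq_iff by blast

definition HA :: "nat set \<Rightarrow> part set" where "HA A = {t\<in>P. (A,A) \<in> Phi t}"
definition CA :: "nat set \<Rightarrow> nat set \<Rightarrow> part set" where "CA A B = {t\<in>P. (A,B) \<in> Phi t}"

lemma rcoset_sub: "H \<subseteq> P \<Longrightarrow> x \<in> P \<Longrightarrow> rcoset mult H x \<subseteq> P"
  unfolding rcoset_def using mclosed by auto

lemma U_HA: assumes A: "A \<in> Qs n" and x: "x \<in> P"
  shows "upc P mult (rcoset mult (HA A) x) = {t\<in>P. \<forall>B. (A,B) \<in> Phi x \<longrightarrow> (A,B) \<in> Phi t}"
proof -
  have sub: "HA A \<subseteq> P" unfolding HA_def by auto
  have "upc P mult (rcoset mult (HA A) x) = {t\<in>P. \<exists>h\<in>HA A. Phi (mult h x) \<subseteq> Phi t}"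
    using upc_eq[OF rcoset_sub[OF sub x]] unfolding rcoset_def by auto
  also have "\<dots> = {t\<in>P. \<forall>B. (A,B) \<in> Phi x \<longrightarrow> (A,B) \<in> Phi t}"
  proof (intro Collect_cong conj_cong refl)
    fix t assume t: "t \<in> P"
    show "(\<exists>h\<in>HA A. Phi (mult h x) \<subseteq> Phi t) = (\<forall>B. (A,B) \<in> Phi x \<longrightarrow> (A,B) \<in> Phi t)"
    proof
      assume "\<exists>h\<in>HA A. Phi (mult h x) \<subseteq> Phi t"
      then obtain h where "h \<in> HA A" "Phi (mult h x) \<subseteq> Phi t" by auto
      then show "\<forall>B. (A,B) \<in> Phi x \<longrightarrow> (A,B) \<in> Phi t" using x unfolding HA_def by (auto simp: hom)
    next
      assume r: "\<forall>B. (A,B) \<in> Phi x \<longrightarrow> (A,B) \<in> Phi t"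
      have "sg A A \<in> HA A" using sg[OF A A] unfolding HA_def by auto
      moreover have "Phi (mult (sg A A) x) \<subseteq> Phi t" using sg[OF A A] x r by (auto simp: hom)
      ultimately show "\<exists>h\<in>HA A. Phi (mult h x) \<subseteq> Phi t" by blast
    qed
  qed
  finally show ?thesis .
qed

lemma U_HA_in: assumes A: "A \<in> Qs n" and x: "x \<in> P" and "(A,B) \<in> Phi x"
  shows "upc P mult (rcoset mult (HA A) x) = CA A B"
  unfolding U_HA[OF A x] CA_def using assms Phi_pinj[OF x] by (auto dest: pinjD1)

lemma U_HA_out: assumes A: "A \<in> Qs n" and x: "x \<in> P" and "A \<notin> Domain (Phi x)"
  shows "upc P mult (rcoset mult (HA A) x) = P"
  unfolding U_HA[OF A x] using assms by auto

lemma CA_inj: assumes "A \<in> Qs n" "B \<in> Qs n" "B' \<in> Qs n" "CA A B = CA A B'" shows "B = B'"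
proof -
  have "sg A B \<in> CA A B" using sg[OF assms(1,2)] unfolding CA_def by auto
  then have "(A,B') \<in> Phi (sg A B)" using assms(4) unfolding CA_def by auto
  then show ?thesis using sg[OF assms(1,2)] by auto
qed

lemma CA_ne_P: assumes "A \<in> Qs n" "B \<in> Qs n" shows "CA A B \<noteq> P"
proof
  assume e: "CA A B = P"
  have "A \<in> Qs n" using assms by auto
  obtain C where C: "C \<in> Qs n" "C \<noteq> B"
  proof -
    have "{1..n} \<in> Qs n" "{1} \<in> Qs n" using n2 unfolding Qs_def by auto
    moreover have "{1..n} \<noteq> {1::nat}"
    proof
      assume "{1..n} = {1::nat}" then have "n \<in> {1::nat}" using n2 by (metis atLeastAtMost_iff le_refl one_le_numeral order_trans)
      then show False using n2 by simp
    qed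
    ultimately show ?thesis using that by blast
  qed
  have "sg A C \<in> P" using sg[OF assms(1) C(1)] by auto
  then have "(A,B) \<in> Phi (sg A C)" using e unfolding CA_def by auto
  then show False using sg[OF assms(1) C(1)] C by auto
qed

lemma cosets_HA: assumes A: "A \<in> Qs n"
  shows "cosets P mult (HA A) = CA A ` Qs n"
proof
  show "cosets P mult (HA A) \<subseteq> CA A ` Qs n"
  proof
    fix c assume "c \<in> cosets P mult (HA A)"
    then obtain s where s: "s \<in> P" "mult s (sinv P mult s) \<in> HA A" "c = upc P mult (rcoset mult (HA A) s)"
      unfolding cosets_def by auto
    then have "(A,A) \<in> Phi s O (Phi s)\<inverse>" using tr[OF s(1)] unfolding HA_def by (auto simp: sinv_eq hom)
    then obtain B where B: "(A,B) \<in> Phi s" by auto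
    then have "B \<in> Qs n" using Phi_sub[OF s(1)] by auto
    then show "c \<in> CA A ` Qs n" using U_HA_in[OF A s(1) B] s(3) by auto
  qed
next
  show "CA A ` Qs n \<subseteq> cosets P mult (HA A)"
  proof
    fix c assume "c \<in> CA A ` Qs n"
    then obtain B where B: "B \<in> Qs n" "c = CA A B" by auto
    let ?s = "sg A B"
    have s: "?s \<in> P" "Phi ?s = {(A,B)}" using sg[OF A B(1)] by auto
    have "mult ?s (sinv P mult ?s) \<in> HA A" using s tr[OF s(1)] unfolding HA_def
      by (auto simp: sinv_eq hom mclosed)
    moreover have "c = upc P mult (rcoset mult (HA A) ?s)" using U_HA_in[OF A s(1)] s B by auto
    ultimately show "c \<in> cosets P mult (HA A)" unfolding cosets_def using s by auto
  qed
qed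

lemma card_cosets_HA: assumes A: "A \<in> Qs n" shows "card (cosets P mult (HA A)) = 2 ^ n - 1"
proof -
  have "inj_on (CA A) (Qs n)" unfolding inj_on_def using CA_inj[OF A] by blast
  then show ?thesis using cosets_HA[OF A] card_Qs by (simp add: card_image)
qed

lemma U_HA_cos: assumes A: "A \<in> Qs n" and x: "x \<in> P"
  shows "upc P mult (rcoset mult (HA A) x) \<in> cosets P mult (HA A) \<longleftrightarrow> A \<in> Domain (Phi x)"
proof
  assume c: "upc P mult (rcoset mult (HA A) x) \<in> cosets P mult (HA A)"
  show "A \<in> Domain (Phi x)"
  proof (rule ccontr)
    assume "A \<notin> Domain (Phi x)"
    then have "upc P mult (rcoset mult (HA A) x) = P" using U_HA_out[OF A x] by auto
    with c cosets_HA[OF A] have "P \<in> CA A ` Qs n" by simp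
    then obtain B where "B \<in> Qs n" "CA A B = P" by blast
    with CA_ne_P[OF A] show False by blast
  qed
next
  assume "A \<in> Domain (Phi x)"
  then obtain B where B: "(A,B) \<in> Phi x" by auto
  then have "B \<in> Qs n" using Phi_sub[OF x] by auto
  then show "upc P mult (rcoset mult (HA A) x) \<in> cosets P mult (HA A)"
    using U_HA_in[OF A x B] cosets_HA[OF A] by auto
qed

lemma phi_HA: assumes A: "A \<in> Qs n" and s: "s \<in> P"
  shows "phi P mult (HA A) s = (\<lambda>(B,D). (CA A B, CA A D)) ` Phi s"
proof
  show "phi P mult (HA A) s \<subseteq> (\<lambda>(B,D). (CA A B, CA A D)) ` Phi s"
  proof
    fix p assume "p \<in> phi P mult (HA A) s"
    then obtain x where x: "x \<in> P" "p = (upc P mult (rcoset mult (HA A) x), upc P mult (rcoset mult (HA A) (mult x s)))"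
      "upc P mult (rcoset mult (HA A) x) \<in> cosets P mult (HA A)"
      "upc P mult (rcoset mult (HA A) (mult x s)) \<in> cosets P mult (HA A)"
      unfolding phi_def by auto
    have xs: "mult x s \<in> P" using x s mclosed by auto
    obtain B where B: "(A,B) \<in> Phi x" using U_HA_cos[OF A x(1)] x(3) by auto
    obtain D where D: "(A,D) \<in> Phi (mult x s)" using U_HA_cos[OF A xs] x(4) by auto
    then obtain B' where "(A,B') \<in> Phi x" "(B',D) \<in> Phi s" using x s by (auto simp: hom)
    then have BD: "(B,D) \<in> Phi s" using B Phi_pinj[OF x(1)] by (metis pinjD1)
    have "p = (CA A B, CA A D)" using x(2) U_HA_in[OF A x(1) B] U_HA_in[OF A xs D] by simp
    with BD show "p \<in> (\<lambda>(B,D). (CA A B, CA A D)) ` Phi s" by force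
  qed
next
  show "(\<lambda>(B,D). (CA A B, CA A D)) ` Phi s \<subseteq> phi P mult (HA A) s"
  proof
    fix p assume "p \<in> (\<lambda>(B,D). (CA A B, CA A D)) ` Phi s"
    then obtain B D where BD: "(B,D) \<in> Phi s" "p = (CA A B, CA A D)" by auto
    have B: "B \<in> Qs n" using BD Phi_sub[OF s] by auto
    let ?x = "sg A B"
    have x: "?x \<in> P" "Phi ?x = {(A,B)}" using sg[OF A B] by auto
    have xs: "mult ?x s \<in> P" "(A,D) \<in> Phi (mult ?x s)" using x s BD by (auto simp: hom mclosed)
    have "upc P mult (rcoset mult (HA A) ?x) = CA A B" using U_HA_in[OF A x(1)] x by auto
    moreover have "upc P mult (rcoset mult (HA A) (mult ?x s)) = CA A D" using U_HA_in[OF A xs] .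
    moreover have "upc P mult (rcoset mult (HA A) ?x) \<in> cosets P mult (HA A)"
      using U_HA_cos[OF A x(1)] x by auto
    moreover have "upc P mult (rcoset mult (HA A) (mult ?x s)) \<in> cosets P mult (HA A)"
      using U_HA_cos[OF A xs(1)] xs by auto
    ultimately show "p \<in> phi P mult (HA A) s" unfolding phi_def using BD(2) x(1) by blast
  qed
qed

lemma img_O: assumes "inj_on g Q" "r \<subseteq> Q \<times> Q" "q \<subseteq> Q \<times> Q"
  shows "(\<lambda>(B,D). (g B, g D)) ` (r O q) = ((\<lambda>(B,D). (g B, g D)) ` r) O ((\<lambda>(B,D). (g B, g D)) ` q)"
    (is "?L = ?R")
proof
  show "?L \<subseteq> ?R" by force
next
  show "?R \<subseteq> ?L"
  proof
    fix p assume "p \<in> ?R"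
    then obtain a b c d where p: "p = (g a, g d)" "(a,b) \<in> r" "(c,d) \<in> q" "g b = g c"
      by (auto simp: relcomp_unfold)
    then have "b = c" using assms(1-3) by (auto dest: inj_onD)
    then have "(a,d) \<in> r O q" using p by blast
    then show "p \<in> ?L" using p(1) by (simp add: image_iff) (metis case_prod_conv)
  qed
qed

lemma img_inj: assumes "inj_on g Q" "r \<subseteq> Q \<times> Q" "q \<subseteq> Q \<times> Q"
   "(\<lambda>(B,D). (g B, g D)) ` r = (\<lambda>(B,D). (g B, g D)) ` q" shows "r = q"
proof -
  have "inj_on (\<lambda>(B,D). (g B, g D)) (Q \<times> Q)" using assms(1) by (auto simp: inj_on_def)
  then show ?thesis using assms(2-4) by (metis inj_on_image_eq_iff)
qed

lemma HA_closed: assumes A: "A \<in> Qs n" shows "closed_inv_sub P mult (HA A)"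
proof -
  have sub: "HA A \<subseteq> P" unfolding HA_def by auto
  have "sg A A \<in> HA A" using sg[OF A A] unfolding HA_def by auto
  moreover have "\<forall>x\<in>HA A. \<forall>y\<in>HA A. mult x y \<in> HA A" unfolding HA_def by (auto simp: hom mclosed)
  moreover have "\<forall>x\<in>HA A. sinv P mult x \<in> HA A" unfolding HA_def using tr by (auto simp: sinv_eq)
  moreover have "upc P mult (HA A) = HA A" unfolding upc_eq[OF sub] unfolding HA_def by auto
  ultimately show ?thesis unfolding closed_inv_sub_def inv_subsemigroup_def using sub by auto
qed

lemma HA_faithful: assumes A: "A \<in> Qs n" shows "inj_on (phi P mult (HA A)) P"
proof (rule inj_onI)
  fix s t assume st: "s \<in> P" "t \<in> P" "phi P mult (HA A) s = phi P mult (HA A) t"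
  have "inj_on (CA A) (Qs n)" unfolding inj_on_def using CA_inj[OF A] by blast
  then have "Phi s = Phi t" using st phi_HA[OF A] Phi_sub[of s] Phi_sub[of t] img_inj[of "CA A" "Qs n" "Phi s" "Phi t"] by simp
  then show "s = t" using st Phi_eq by auto
qed

lemma HA_hom: assumes A: "A \<in> Qs n" and st: "s \<in> P" "t \<in> P"
  shows "phi P mult (HA A) (mult s t) = phi P mult (HA A) s O phi P mult (HA A) t"
proof -
  have "inj_on (CA A) (Qs n)" unfolding inj_on_def using CA_inj[OF A] by blast
  then show ?thesis using phi_HA[OF A] st mclosed[OF st] hom[OF st] Phi_sub[of s] Phi_sub[of t]
    img_O[of "CA A" "Qs n" "Phi s" "Phi t"] by simp
qed


lemma K_is_HA: assumes K: "closed_inv_sub P mult K" and inj: "inj_on (phi P mult K) P"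
  shows "\<exists>A\<in>Qs n. K = HA A"
proof -
  have Kne: "K \<noteq> {}" and Ksub: "K \<subseteq> P" and Kmul: "\<And>x y. x \<in> K \<Longrightarrow> y \<in> K \<Longrightarrow> mult x y \<in> K"
    and Kinv0: "\<And>x. x \<in> K \<Longrightarrow> sinv P mult x \<in> K" and Kup0: "upc P mult K = K"
    using K unfolding closed_inv_sub_def inv_subsemigroup_def by auto
  have Kinv: "\<And>x. x \<in> K \<Longrightarrow> tr x \<in> K" using Kinv0 Ksub sinv_eq by (metis subsetD)
  have Kup: "\<And>t k. t \<in> P \<Longrightarrow> k \<in> K \<Longrightarrow> Phi k \<subseteq> Phi t \<Longrightarrow> t \<in> K"
  proof -
    fix t k assume "t \<in> P" "k \<in> K" "Phi k \<subseteq> Phi t"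
    then have "t \<in> upc P mult K" using upc_eq[OF Ksub] by auto
    then show "t \<in> K" using Kup0 by simp
  qed
  have KP: "\<And>x. x \<in> K \<Longrightarrow> x \<in> P" using Ksub by auto
  define F where "F = {k\<in>K. Phi k \<subseteq> Id}"
  obtain k0 where k0: "k0 \<in> K" using Kne by auto
  have "mult k0 (tr k0) \<in> F"
  proof -
    have "Phi (mult k0 (tr k0)) = Phi k0 O (Phi k0)\<inverse>" using KP[OF k0] tr by (simp add: hom)
    also have "\<dots> = Id_on (Domain (Phi k0))" using R1[OF Phi_pinj[OF KP[OF k0]]] .
    finally show ?thesis unfolding F_def using Kmul[OF k0 Kinv[OF k0]] by auto
  qed
  then obtain f where f: "f \<in> F" and fleast: "\<And>e. e \<in> F \<Longrightarrow> card (Phi f) \<le> card (Phi e)"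
    using ex_has_least_nat[of "\<lambda>k. k \<in> F" "mult k0 (tr k0)" "\<lambda>k. card (Phi k)"] by blast
  have fK: "f \<in> K" and fP: "f \<in> P" and fId: "Phi f \<subseteq> Id" using f KP unfolding F_def by auto
  have finf: "finite (Phi f)" using Phi_sub[OF fP] finite_Qs by (meson finite_SigmaI finite_subset)
  have fmin: "\<And>e. e \<in> F \<Longrightarrow> Phi f \<subseteq> Phi e"
  proof -
    fix e assume e: "e \<in> F"
    then have eK: "e \<in> K" and eId: "Phi e \<subseteq> Id" unfolding F_def by auto
    have fe: "Phi (mult f e) = Phi f O Phi e" using fP KP[OF eK] hom by auto
    have sub: "Phi f O Phi e \<subseteq> Phi f" using eId by auto
    have "mult f e \<in> F" unfolding F_def using Kmul[OF fK eK] fe sub fId by auto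
    then have "card (Phi f) \<le> card (Phi f O Phi e)" using fleast fe by metis
    then have eq: "Phi f O Phi e = Phi f" using sub finf by (meson card_seteq)
    show "Phi f \<subseteq> Phi e"
    proof
      fix p assume p: "p \<in> Phi f"
      then obtain a where a: "p = (a,a)" using fId by auto
      then have "(a,a) \<in> Phi f O Phi e" using eq p by simp
      then obtain c where "(a,c) \<in> Phi f" "(c,a) \<in> Phi e" by auto
      then show "p \<in> Phi e" using a fId by auto
    qed
  qed
  have kkF: "\<And>k. k \<in> K \<Longrightarrow> mult k (tr k) \<in> F \<and> Phi (mult k (tr k)) = Id_on (Domain (Phi k))"
  proof -
    fix k assume k: "k \<in> K"
    have "Phi (mult k (tr k)) = Phi k O (Phi k)\<inverse>" using KP[OF k] tr by (simp add: hom)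
    also have "\<dots> = Id_on (Domain (Phi k))" using R1[OF Phi_pinj[OF KP[OF k]]] .
    finally show "mult k (tr k) \<in> F \<and> Phi (mult k (tr k)) = Id_on (Domain (Phi k))"
      unfolding F_def using Kmul[OF k Kinv[OF k]] by auto
  qed
  define D where "D = Domain (Phi f)"
  have PfD: "Phi f = Id_on D" unfolding D_def using fId by auto
  define N where "N = {1..n}"
  have NQ: "N \<in> Qs n" and oQ: "{1} \<in> Qs n" unfolding N_def Qs_def using n2 by auto
  have Nne: "N \<noteq> {1}"
  proof
    assume "N = {1}" then have "n \<in> {1::nat}" using n2 unfolding N_def by (metis atLeastAtMost_iff le_refl one_le_numeral order_trans)
    then show False using n2 by simp
  qed
  define E1 where "E1 = sg N N"
  define E2 where "E2 = sg N {1}"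
  have E1: "E1 \<in> P" "Phi E1 = {(N,N)}" using sg[OF NQ NQ] E1_def by auto
  have E2: "E2 \<in> P" "Phi E2 = {(N,{1})}" using sg[OF NQ oQ] E2_def by auto
  have E12: "E1 \<noteq> E2" using E1 E2 Nne by auto
  have phiE: "phi P mult K E1 \<noteq> phi P mult K E2" using inj E1 E2 E12 by (meson inj_onD)
  have Ucos: "\<And>x. x \<in> P \<Longrightarrow> upc P mult (rcoset mult K x) \<in> cosets P mult K \<Longrightarrow> D \<subseteq> Domain (Phi x)"
  proof -
    fix x assume x: "x \<in> P" and c: "upc P mult (rcoset mult K x) \<in> cosets P mult K"
    then obtain s where s: "s \<in> P" "mult s (sinv P mult s) \<in> K"
      "upc P mult (rcoset mult K x) = upc P mult (rcoset mult K s)"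
      unfolding cosets_def by auto
    have "x \<in> upc P mult (rcoset mult K x)"
    proof -
      have "Phi (mult f x) \<subseteq> Phi x" using fP x fId by (auto simp: hom)
      then show ?thesis using upc_eq[OF rcoset_sub[OF Ksub x]] x fK unfolding rcoset_def by auto
    qed
    then have "x \<in> upc P mult (rcoset mult K s)" using s by simp
    then obtain k where k: "k \<in> K" "Phi (mult k s) \<subseteq> Phi x"
      using upc_eq[OF rcoset_sub[OF Ksub s(1)]] unfolding rcoset_def by auto
    have ssK: "mult s (tr s) \<in> K" using s sinv_eq by simp
    define g where "g = mult (mult k (mult s (tr s))) (tr k)"
    have gK: "g \<in> K" unfolding g_def using Kmul Kinv k ssK by blast
    have "Phi g = (Phi k O Phi s) O (Phi k O Phi s)\<inverse>"
      unfolding g_def using KP[OF k(1)] s(1) tr[OF s(1)] tr[OF KP[OF k(1)]]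
      by (simp add: hom mclosed O_assoc converse_relcomp)
    also have "\<dots> = Id_on (Domain (Phi k O Phi s))"
      using R1[OF pinj_O[OF Phi_pinj[OF KP[OF k(1)]] Phi_pinj[OF s(1)]]] .
    finally have Pg: "Phi g = Id_on (Domain (Phi k O Phi s))" .
    then have "g \<in> F" unfolding F_def using gK by auto
    then have "Phi f \<subseteq> Id_on (Domain (Phi k O Phi s))" using fmin Pg by metis
    then have "D \<subseteq> Domain (Phi k O Phi s)" using PfD by (auto simp: Id_on_iff) (metis Id_onI Id_on_iff subsetD)
    also have "\<dots> \<subseteq> Domain (Phi x)" using k KP[OF k(1)] s(1) by (auto simp: hom)
    finally show "D \<subseteq> Domain (Phi x)" .
  qed
  show ?thesis
  proof (cases "D = {}")
    case True
    then have Pf0: "Phi f = {}" using PfD by simp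
    have allK: "\<And>t. t \<in> P \<Longrightarrow> t \<in> K" using Kup fK Pf0 by blast
    have Uall: "\<And>x. x \<in> P \<Longrightarrow> upc P mult (rcoset mult K x) = P"
    proof -
      fix x assume x: "x \<in> P"
      have "Phi (mult f x) = {}" using fP x Pf0 by (simp add: hom)
      then show "upc P mult (rcoset mult K x) = P"
        using upc_eq[OF rcoset_sub[OF Ksub x]] fK unfolding rcoset_def by auto
    qed
    have phiall: "\<And>s. s \<in> P \<Longrightarrow> phi P mult K s = {(P,P)}"
    proof -
      fix s assume s: "s \<in> P"
      have "P \<in> cosets P mult K" unfolding cosets_def using s Uall[OF s] allK mclosed[OF s] sinv_eq[OF s] tr[OF s]
        by auto
      have "phi P mult K s \<subseteq> {(P,P)}" unfolding phi_def using Uall mclosed s by auto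
      moreover have "(P,P) \<in> phi P mult K s"
      proof -
        have e1: "upc P mult (rcoset mult K s) = P" and e2: "upc P mult (rcoset mult K (mult s s)) = P"
          using Uall s mclosed by auto
        have c1: "upc P mult (rcoset mult K s) \<in> cosets P mult K"
          using e1 \<open>P \<in> cosets P mult K\<close> by simp
        have c2: "upc P mult (rcoset mult K (mult s s)) \<in> cosets P mult K"
          using e2 \<open>P \<in> cosets P mult K\<close> by simp
        have "(upc P mult (rcoset mult K s), upc P mult (rcoset mult K (mult s s))) \<in> phi P mult K s"
          unfolding phi_def using s c1 c2 by blast
        then show ?thesis using e1 e2 by simp
      qed
      ultimately show "phi P mult K s = {(P,P)}" by blast
    qed
    then show ?thesis using phiE E1 E2 by simp
  next
    case False
    show ?thesis
    proof (cases "\<exists>a b. a \<in> D \<and> b \<in> D \<and> a \<noteq> b")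
      case True
      then obtain a b where ab: "a \<in> D" "b \<in> D" "a \<noteq> b" by auto
      have empt: "\<And>E C. E \<in> P \<Longrightarrow> Phi E = {(N,C)} \<Longrightarrow> phi P mult K E = {}"
      proof -
        fix E C assume E: "E \<in> P" "Phi E = {(N,C)}"
        show "phi P mult K E = {}"
        proof (rule ccontr)
          assume "phi P mult K E \<noteq> {}"
          then obtain x where x: "x \<in> P" "upc P mult (rcoset mult K (mult x E)) \<in> cosets P mult K"
            unfolding phi_def by auto
          have "D \<subseteq> Domain (Phi (mult x E))" using Ucos[OF mclosed[OF x(1) E(1)] x(2)] .
          then have "(a,N) \<in> Phi x" "(b,N) \<in> Phi x" using ab x E by (auto simp: hom)
          then show False using ab Phi_pinj[OF x(1)] by (metis pinjD2)
        qed
      qed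
      show ?thesis using empt[OF E1] empt[OF E2] phiE by simp
    next
      case False2: False
      then obtain A where DA: "D = {A}" using False by blast
      have PfA: "Phi f = {(A,A)}" using PfD DA by auto
      have AQ: "A \<in> Qs n" using Phi_sub[OF fP] PfA by auto
      have "K = HA A"
      proof
        show "K \<subseteq> HA A"
        proof
          fix k assume k: "k \<in> K"
          have "Phi f \<subseteq> Id_on (Domain (Phi k))" using fmin kkF[OF k] by metis
          then have "A \<in> Domain (Phi k)" using PfA by auto
          then obtain B where B: "(A,B) \<in> Phi k" by auto
          define fk where "fk = mult f k"
          have fkK: "fk \<in> K" using Kmul fK k fk_def by auto
          have Pfk: "Phi fk = {(A,B)}" using fP KP[OF k] PfA B Phi_pinj[OF KP[OF k]]
            unfolding fk_def by (auto simp: hom dest: pinjD1)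
          define g where "g = mult (tr fk) fk"
          have "g \<in> K" using g_def Kmul Kinv fkK by auto
          moreover have "Phi g = {(B,B)}" unfolding g_def using KP[OF fkK] tr[OF KP[OF fkK]] Pfk
            by (auto simp: hom)
          ultimately have "g \<in> F" unfolding F_def by auto
          then have "Phi f \<subseteq> {(B,B)}" using fmin \<open>Phi g = {(B,B)}\<close> by metis
          then have "A = B" using PfA by auto
          then show "k \<in> HA A" using B KP[OF k] unfolding HA_def by auto
        qed
      next
        show "HA A \<subseteq> K" using Kup fK PfA unfolding HA_def by auto
      qed
      then show ?thesis using AQ by auto
    qed
  qed
qed

lemma rep_equiv_HA: assumes A: "A \<in> Qs n" shows "rep_equiv P mult (HA {1..n}) (HA A)"
proof -
  have NQ: "{1..n} \<in> Qs n" unfolding Qs_def using n2 by auto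
  define a where "a = sg {1..n} A"
  have a: "a \<in> P" "Phi a = {({1..n},A)}" using sg[OF NQ A] a_def by auto
  have ta: "sinv P mult a \<in> P" "Phi (sinv P mult a) = {(A,{1..n})}" using tr[OF a(1)] a sinv_eq[OF a(1)] by auto
  have "(\<lambda>h. mult (mult (sinv P mult a) h) a) ` HA {1..n} \<subseteq> HA A"
  proof (rule image_subsetI)
    fix h assume "h \<in> HA {1..n}"
    then have h: "h \<in> P" "({1..n},{1..n}) \<in> Phi h" unfolding HA_def by auto
    have "(A,A) \<in> ({(A,{1..n})} O Phi h) O {({1..n},A)}" using h by blast
    then show "mult (mult (sinv P mult a) h) a \<in> HA A" unfolding HA_def using a ta h by (auto simp: hom mclosed)
  qed
  moreover have "(\<lambda>k. mult (mult a k) (sinv P mult a)) ` HA A \<subseteq> HA {1..n}"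
  proof (rule image_subsetI)
    fix h assume "h \<in> HA A"
    then have h: "h \<in> P" "(A,A) \<in> Phi h" unfolding HA_def by auto
    have "({1..n},{1..n}) \<in> ({({1..n},A)} O Phi h) O {(A,{1..n})}" using h by blast
    then show "mult (mult a h) (sinv P mult a) \<in> HA {1..n}" unfolding HA_def using a ta h by (auto simp: hom mclosed)
  qed
  ultimately show ?thesis unfolding rep_equiv_def using a by blast
qed

theorem main_abs:
  shows "\<exists>H. closed_inv_sub P mult H
           \<and> inj_on (phi P mult H) P
           \<and> card (cosets P mult H) = 2 ^ n - 1
           \<and> (\<forall>s\<in>P. \<forall>t\<in>P. phi P mult H (mult s t) = phi P mult H s O phi P mult H t)
           \<and> (\<forall>K. closed_inv_sub P mult K \<and> inj_on (phi P mult K) P \<longrightarrow>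
                  card (cosets P mult K) = 2 ^ n - 1 \<and> rep_equiv P mult H K)"
proof (intro exI conjI ballI allI impI)
  have NQ: "{1..n} \<in> Qs n" unfolding Qs_def using n2 by auto
  show "closed_inv_sub P mult (HA {1..n})" using HA_closed[OF NQ] .
  show "inj_on (phi P mult (HA {1..n})) P" using HA_faithful[OF NQ] .
  show "card (cosets P mult (HA {1..n})) = 2 ^ n - 1" using card_cosets_HA[OF NQ] .
  show "phi P mult (HA {1..n}) (mult s t) = phi P mult (HA {1..n}) s O phi P mult (HA {1..n}) t"
    if "s \<in> P" "t \<in> P" for s t using HA_hom[OF NQ that] .
  fix K assume K: "closed_inv_sub P mult K \<and> inj_on (phi P mult K) P"
  then obtain A where A: "A \<in> Qs n" "K = HA A" using K_is_HA by blast
  show "card (cosets P mult K) = 2 ^ n - 1" using A card_cosets_HA by simp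
  show "rep_equiv P mult (HA {1..n}) K" using A rep_equiv_HA by simp
qed

end


lemma mem_mkblk[simp]: "(i,b) \<in> mkblk A B \<longleftrightarrow> (b \<and> i \<in> B) \<or> (\<not> b \<and> i \<in> A)"
  unfolding mkblk_def by auto
lemma mem_topp[simp]: "i \<in> topp L \<longleftrightarrow> (i,False) \<in> L" unfolding topp_def by auto
lemma mem_botp[simp]: "i \<in> botp L \<longleftrightarrow> (i,True) \<in> L" unfolding botp_def by auto
lemma mkblk_tb[simp]: "mkblk (topp L) (botp L) = L"
proof (rule set_eqI)
  fix x :: pt show "x \<in> mkblk (topp L) (botp L) \<longleftrightarrow> x \<in> L"
    by (cases x) (metis (full_types) mem_mkblk mem_topp mem_botp)
qed
lemma topp_mkblk[simp]: "topp (mkblk A B) = A" unfolding topp_def by auto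
lemma botp_mkblk[simp]: "botp (mkblk A B) = B" unfolding botp_def by auto
lemma mkblk_inj: "mkblk A B = mkblk C D \<Longrightarrow> A = C \<and> B = D"
  by (metis topp_mkblk botp_mkblk)
lemma mem_XsXp: "(i,b) \<in> Xs n \<union> Xp n \<longleftrightarrow> 1 \<le> i \<and> i \<le> n"
  unfolding Xs_def Xp_def by auto
lemma mkblk_sub: "mkblk A B \<subseteq> Xs n \<union> Xp n \<longleftrightarrow> A \<subseteq> {1..n} \<and> B \<subseteq> {1..n}"
  unfolding mkblk_def Xs_def Xp_def by auto

lemma gline_iff: "is_gline n L \<longleftrightarrow> topp L \<inter> {1..n} \<noteq> {} \<and> botp L \<inter> {1..n} \<noteq> {}"
  unfolding is_gline_def Xs_def Xp_def topp_def botp_def by auto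

lemma gline_not_point: "is_gline n L \<Longrightarrow> \<not> is_point L"
proof
  assume g: "is_gline n L" and p: "is_point L"
  then obtain x where "L = {x}" unfolding is_point_def by (metis card_1_singletonE)
  with g show False unfolding is_gline_def Xs_def Xp_def by auto
qed

lemma point_not_gline: "is_point L \<Longrightarrow> \<not> is_gline n L" using gline_not_point by blast

lemma PnD:
  assumes "\<alpha> \<in> Pn n"
  shows "\<And>x. x \<in> Xs n \<union> Xp n \<Longrightarrow> \<exists>L\<in>\<alpha>. x \<in> L"
    and "\<And>L. L \<in> \<alpha> \<Longrightarrow> L \<subseteq> Xs n \<union> Xp n"
    and "\<And>L. L \<in> \<alpha> \<Longrightarrow> L \<noteq> {}"
    and "\<And>L M x. L \<in> \<alpha> \<Longrightarrow> M \<in> \<alpha> \<Longrightarrow> x \<in> L \<Longrightarrow> x \<in> M \<Longrightarrow> L = M"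
    and "\<And>L. L \<in> \<alpha> \<Longrightarrow> is_point L \<or> is_gline n L"
  using assms unfolding Pn_def partition_on_def disjoint_def by blast+

lemma PnI:
  assumes "\<Union>\<alpha> = Xs n \<union> Xp n"
    and "\<And>L M x. L \<in> \<alpha> \<Longrightarrow> M \<in> \<alpha> \<Longrightarrow> x \<in> L \<Longrightarrow> x \<in> M \<Longrightarrow> L = M"
    and "\<And>L. L \<in> \<alpha> \<Longrightarrow> is_point L \<or> is_gline n L"
  shows "\<alpha> \<in> Pn n"
proof -
  have "{} \<notin> \<alpha>"
  proof
    assume "{} \<in> \<alpha>" then have "is_point ({}::pt set) \<or> is_gline n {}" by (rule assms(3))
    then show False unfolding is_point_def is_gline_def by auto
  qed
  then show ?thesis using assms unfolding Pn_def partition_on_def disjoint_def by blast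
qed

lemma point_eq: "is_point L \<Longrightarrow> x \<in> L \<Longrightarrow> L = {x}"
  unfolding is_point_def by (metis card_1_singletonE singletonD)

lemma Pn_eqI:
  assumes a: "\<alpha> \<in> Pn n" and b: "\<beta> \<in> Pn n"
    and ab: "\<And>L. L \<in> \<alpha> \<Longrightarrow> is_gline n L \<Longrightarrow> L \<in> \<beta>"
    and ba: "\<And>L. L \<in> \<beta> \<Longrightarrow> is_gline n L \<Longrightarrow> L \<in> \<alpha>"
  shows "\<alpha> = \<beta>"
proof -
  have gen: "L \<in> y" if x: "x \<in> Pn n" and y: "y \<in> Pn n" and xy: "\<And>L. L \<in> x \<Longrightarrow> is_gline n L \<Longrightarrow> L \<in> y"
    and yx: "\<And>L. L \<in> y \<Longrightarrow> is_gline n L \<Longrightarrow> L \<in> x" and L: "L \<in> x" for x y L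
  proof (cases "is_gline n L")
    case True then show ?thesis using xy L by auto
  next
    case False
    then have pL: "is_point L" using PnD(5)[OF x L] by auto
    then obtain p where Lp: "L = {p}" unfolding is_point_def by (metis card_1_singletonE)
    have "p \<in> Xs n \<union> Xp n" using PnD(2)[OF x L] Lp by auto
    then obtain M where M: "M \<in> y" "p \<in> M" using PnD(1)[OF y] by blast
    show ?thesis
    proof (cases "is_gline n M")
      case True
      then have "M \<in> x" using yx M by auto
      then have "M = L" using PnD(4)[OF x _ L] M Lp by auto
      then show ?thesis using M by auto
    next
      case False
      then have "is_point M" using PnD(5)[OF y M(1)] by auto
      then have "M = {p}" using point_eq[OF _ M(2)] by auto
      then show ?thesis using M Lp by auto
    qed
  qed
  show ?thesis using gen[OF a b ab ba] gen[OF b a ba ab] by blast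
qed

definition sw :: "pt \<Rightarrow> pt" where "sw p = (fst p, \<not> snd p)"
lemma sw_sw[simp]: "sw (sw p) = p" unfolding sw_def by auto
lemma sw_inj: "inj sw" by (metis injI sw_sw)
lemma sw_simp[simp]: "sw (i,b) = (i, \<not> b)" unfolding sw_def by simp
lemma sw_img_mem: "x \<in> sw ` S \<longleftrightarrow> sw x \<in> S" by (metis imageE image_eqI sw_sw)
lemma sw_XsXp: "sw ` (Xs n \<union> Xp n) = Xs n \<union> Xp n"
proof (rule set_eqI)
  fix x :: pt show "x \<in> sw ` (Xs n \<union> Xp n) \<longleftrightarrow> x \<in> Xs n \<union> Xp n"
    unfolding sw_img_mem by (cases x) (simp only: sw_simp mem_XsXp)
qed
lemma sw_mkblk: "sw ` mkblk A B = mkblk B A"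
proof (rule set_eqI)
  fix x :: pt show "x \<in> sw ` mkblk A B \<longleftrightarrow> x \<in> mkblk B A"
    unfolding sw_img_mem by (cases x) auto
qed
lemma sw_mem: "sw x \<in> sw ` L \<longleftrightarrow> x \<in> L" using sw_inj by (simp add: inj_image_mem_iff)

definition trp :: "part \<Rightarrow> part" where "trp \<alpha> = (\<lambda>L. sw ` L) ` \<alpha>"

lemma sw_point: "is_point (sw ` L) \<longleftrightarrow> is_point L"
  unfolding is_point_def using sw_inj by (simp add: card_image inj_on_subset)
lemma sw_gline: "is_gline n (sw ` L) \<longleftrightarrow> is_gline n L"
proof -
  have "sw ` L = mkblk (botp L) (topp L)" using sw_mkblk[of "topp L" "botp L"] by simp
  then show ?thesis unfolding gline_iff by auto
qed

lemma trp_Pn: assumes a: "\<alpha> \<in> Pn n" shows "trp \<alpha> \<in> Pn n"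
proof (rule PnI)
  show "\<Union>(trp \<alpha>) = Xs n \<union> Xp n"
  proof -
    have "\<Union>(trp \<alpha>) = sw ` \<Union>\<alpha>" unfolding trp_def by auto
    also have "\<Union>\<alpha> = Xs n \<union> Xp n" using PnD(1,2)[OF a] by blast
    finally show ?thesis using sw_XsXp by simp
  qed
  show "L = M" if LM: "L \<in> trp \<alpha>" "M \<in> trp \<alpha>" "x \<in> L" "x \<in> M" for L M x
  proof -
    obtain L' where "L' \<in> \<alpha>" "L = sw ` L'" using LM(1) unfolding trp_def by (rule imageE)
    moreover obtain M' where "M' \<in> \<alpha>" "M = sw ` M'" using LM(2) unfolding trp_def by (rule imageE)
    moreover have "sw x \<in> L'" "sw x \<in> M'" using LM calculation sw_img_mem by auto
    ultimately show ?thesis using PnD(4)[OF a] by metis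
  qed
  show "is_point L \<or> is_gline n L" if "L \<in> trp \<alpha>" for L
    using that PnD(5)[OF a] sw_point sw_gline unfolding trp_def by auto
qed

definition sgl :: "nat \<Rightarrow> nat set \<Rightarrow> nat set \<Rightarrow> part" where
  "sgl n A B = insert (mkblk A B) {{x} | x. x \<in> Xs n \<union> Xp n \<and> x \<notin> mkblk A B}"

lemma sgl_mem: "L \<in> sgl n A B \<longleftrightarrow> L = mkblk A B \<or> (\<exists>y. L = {y} \<and> y \<in> Xs n \<union> Xp n \<and> y \<notin> mkblk A B)"
  unfolding sgl_def by blast

lemma Qs_gline: "A \<in> Qs n \<Longrightarrow> B \<in> Qs n \<Longrightarrow> is_gline n (mkblk A B)"
  unfolding gline_iff Qs_def by auto

lemma single_point: "is_point {y}" unfolding is_point_def by simp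

lemma sgl_Pn: assumes "A \<in> Qs n" "B \<in> Qs n" shows "sgl n A B \<in> Pn n"
proof (rule PnI)
  have sub: "mkblk A B \<subseteq> Xs n \<union> Xp n" using assms unfolding Qs_def mkblk_sub by auto
  show "\<Union>(sgl n A B) = Xs n \<union> Xp n"
  proof
    show "\<Union>(sgl n A B) \<subseteq> Xs n \<union> Xp n"
    proof
      fix x assume "x \<in> \<Union>(sgl n A B)"
      then obtain L where L: "L \<in> sgl n A B" "x \<in> L" by blast
      then show "x \<in> Xs n \<union> Xp n" using sub sgl_mem[of L] by auto
    qed
    show "Xs n \<union> Xp n \<subseteq> \<Union>(sgl n A B)"
    proof
      fix x assume x: "x \<in> Xs n \<union> Xp n"
      show "x \<in> \<Union>(sgl n A B)"
      proof (cases "x \<in> mkblk A B")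
        case True then show ?thesis using sgl_mem[of "mkblk A B"] by blast
      next
        case False then have "{x} \<in> sgl n A B" using sgl_mem[of "{x}"] x by blast
        then show ?thesis by blast
      qed
    qed
  qed
  show "L = M" if LM: "L \<in> sgl n A B" "M \<in> sgl n A B" "x \<in> L" "x \<in> M" for L M x
  proof -
    have l: "L = mkblk A B \<or> (\<exists>y. L = {y} \<and> y \<notin> mkblk A B)" using LM(1) sgl_mem[of L] by auto
    have m: "M = mkblk A B \<or> (\<exists>y. M = {y} \<and> y \<notin> mkblk A B)" using LM(2) sgl_mem[of M] by auto
    show ?thesis using l m LM(3,4) by auto
  qed
  show "is_point L \<or> is_gline n L" if L: "L \<in> sgl n A B" for L
  proof -
    have l: "L = mkblk A B \<or> (\<exists>y. L = {y})" using L sgl_mem[of L] by auto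
    then show ?thesis
    proof
      assume "L = mkblk A B" then show ?thesis using Qs_gline[OF assms] by simp
    next
      assume "\<exists>y. L = {y}" then obtain y where "L = {y}" by blast
      then show ?thesis using single_point[of y] by simp
    qed
  qed
qed

lemma sgl_glines: assumes "L \<in> sgl n A B" "is_gline n L" shows "L = mkblk A B"
proof -
  have l: "L = mkblk A B \<or> (\<exists>y. L = {y})" using assms sgl_mem[of L] by auto
  then show ?thesis
  proof
    assume "\<exists>y. L = {y}" then obtain y where "L = {y}" by blast
    then show ?thesis using single_point[of y] point_not_gline assms(2) by metis
  qed simp
qed



lemma mem_Xs[simp]: "(i,b) \<in> Xs n \<longleftrightarrow> 1 \<le> i \<and> i \<le> n \<and> \<not> b" unfolding Xs_def by auto
lemma mem_Xp[simp]: "(i,b) \<in> Xp n \<longleftrightarrow> 1 \<le> i \<and> i \<le> n \<and> b" unfolding Xp_def by auto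

definition fL :: "pt \<Rightarrow> nat \<times> nat" where "fL p = (fst p, if snd p then 1 else 0)"
definition fR :: "pt \<Rightarrow> nat \<times> nat" where "fR p = (fst p, if snd p then 2 else 1)"

lemma fL_simp[simp]: "fL (i,b) = (i, if b then 1 else 0)" unfolding fL_def by simp
lemma fR_simp[simp]: "fR (i,b) = (i, if b then 2 else 1)" unfolding fR_def by simp
lemma fL_inj: "inj fL" unfolding inj_def fL_def by (auto split: if_splits simp: prod_eq_iff)
lemma fR_inj: "inj fR" unfolding inj_def fR_def by (auto split: if_splits simp: prod_eq_iff)

lemma embL_eq: "embL \<alpha> = (\<lambda>L. fL ` L) ` \<alpha>"
  unfolding embL_def fL_def by (simp add: case_prod_beta)
lemma embR_eq: "embR \<beta> = (\<lambda>L. fR ` L) ` \<beta>"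
  unfolding embR_def fR_def by (simp add: case_prod_beta)

definition R0 :: "part \<Rightarrow> part \<Rightarrow> ((nat \<times> nat) \<times> (nat \<times> nat)) set" where
  "R0 \<alpha> \<beta> = {(u,v). \<exists>B \<in> embL \<alpha> \<union> embR \<beta>. u \<in> B \<and> v \<in> B}"

lemma simrel_R0: "simrel \<alpha> \<beta> = (R0 \<alpha> \<beta>)\<^sup>*" unfolding simrel_def R0_def by simp

lemma R0_sym: "sym (R0 \<alpha> \<beta>)" unfolding R0_def sym_def by blast

lemma simrel_refl: "(u,u) \<in> simrel \<alpha> \<beta>" unfolding simrel_R0 by simp
lemma simrel_sym: "(u,v) \<in> simrel \<alpha> \<beta> \<Longrightarrow> (v,u) \<in> simrel \<alpha> \<beta>"
  unfolding simrel_R0 using sym_rtrancl[OF R0_sym] by (meson symD)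
lemma simrel_trans: "(u,v) \<in> simrel \<alpha> \<beta> \<Longrightarrow> (v,w) \<in> simrel \<alpha> \<beta> \<Longrightarrow> (u,w) \<in> simrel \<alpha> \<beta>"
  unfolding simrel_R0 by (rule rtrancl_trans)
lemma simrel_blk: "B \<in> embL \<alpha> \<union> embR \<beta> \<Longrightarrow> u \<in> B \<Longrightarrow> v \<in> B \<Longrightarrow> (u,v) \<in> simrel \<alpha> \<beta>"
  unfolding simrel_R0 R0_def by blast

lemma simrel_closed:
  assumes cl: "\<And>B. B \<in> embL \<alpha> \<union> embR \<beta> \<Longrightarrow> B \<inter> S \<noteq> {} \<Longrightarrow> B \<subseteq> S"
    and r: "(u,v) \<in> simrel \<alpha> \<beta>" and u: "u \<in> S"
  shows "v \<in> S"
  using r[unfolded simrel_R0] u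
proof (induction rule: rtrancl_induct)
  case base then show ?case .
next
  case (step y z)
  then obtain B where "B \<in> embL \<alpha> \<union> embR \<beta>" "y \<in> B" "z \<in> B" unfolding R0_def by blast
  then show ?case using cl step.IH step.prems by blast
qed

lemma good_cong: assumes "(u,v) \<in> simrel \<alpha> \<beta>" shows "good \<alpha> \<beta> u \<longleftrightarrow> good \<alpha> \<beta> v"
proof -
  have "(u,w) \<in> simrel \<alpha> \<beta> \<longleftrightarrow> (v,w) \<in> simrel \<alpha> \<beta>" for w
    using assms simrel_sym simrel_trans by metis
  then show ?thesis unfolding good_def by simp
qed

lemma good_step:
  assumes g: "good \<alpha> \<beta> u" and B: "B \<in> embL \<alpha> \<union> embR \<beta>" and w: "w \<in> B" and uw: "(u,w) \<in> simrel \<alpha> \<beta>"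
  shows "\<not> is_point B" "\<And>w'. w' \<in> B \<Longrightarrow> (u,w') \<in> simrel \<alpha> \<beta>"
proof -
  show "\<not> is_point B" using g B w uw unfolding good_def by blast
  show "\<And>w'. w' \<in> B \<Longrightarrow> (u,w') \<in> simrel \<alpha> \<beta>" using simrel_trans[OF uw simrel_blk[OF B w]] by blast
qed

lemma point_inj_img: "inj f \<Longrightarrow> is_point (f ` L) \<longleftrightarrow> is_point L"
  unfolding is_point_def by (simp add: card_image inj_on_subset)

lemma mem_outset: "v \<in> outset n \<longleftrightarrow> 1 \<le> fst v \<and> fst v \<le> n \<and> (snd v = 0 \<or> snd v = 2)"
  unfolding outset_def by (cases v) auto

lemma outpt_inj: "v \<in> outset n \<Longrightarrow> w \<in> outset n \<Longrightarrow> outpt v = outpt w \<Longrightarrow> v = w"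
  unfolding outpt_def mem_outset by (cases v, cases w) auto

lemma outpt_XsXp: "v \<in> outset n \<Longrightarrow> outpt v \<in> Xs n \<union> Xp n"
  unfolding outpt_def mem_outset by (cases v) auto

definition inpt :: "pt \<Rightarrow> nat \<times> nat" where "inpt p = (fst p, if snd p then 2 else 0)"

lemma inpt_outset: "p \<in> Xs n \<union> Xp n \<Longrightarrow> inpt p \<in> outset n \<and> outpt (inpt p) = p"
  unfolding inpt_def outpt_def mem_outset by (cases p) auto

definition blkset :: "nat \<Rightarrow> part \<Rightarrow> part \<Rightarrow> nat \<times> nat \<Rightarrow> (nat \<times> nat) set" where
  "blkset n \<alpha> \<beta> u = {v \<in> outset n. v = u \<or> ((u,v) \<in> simrel \<alpha> \<beta> \<and> good \<alpha> \<beta> u)}"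

lemma PIstar_eq: "PIstar n \<alpha> \<beta> = (\<lambda>u. outpt ` blkset n \<alpha> \<beta> u) ` outset n"
  unfolding PIstar_def blkset_def by simp

lemma blkset_good: "u \<in> outset n \<Longrightarrow> good \<alpha> \<beta> u \<Longrightarrow> blkset n \<alpha> \<beta> u = {v \<in> outset n. (u,v) \<in> simrel \<alpha> \<beta>}"
  unfolding blkset_def using simrel_refl by blast

lemma blkset_bad: "u \<in> outset n \<Longrightarrow> \<not> good \<alpha> \<beta> u \<Longrightarrow> blkset n \<alpha> \<beta> u = {u}"
  unfolding blkset_def by blast

lemma blkset_eq: assumes u: "u \<in> outset n" and v: "v \<in> blkset n \<alpha> \<beta> u"
  shows "blkset n \<alpha> \<beta> v = blkset n \<alpha> \<beta> u"
proof (cases "v = u")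
  case True then show ?thesis by simp
next
  case False
  then have uv: "(u,v) \<in> simrel \<alpha> \<beta>" "good \<alpha> \<beta> u" "v \<in> outset n" using v unfolding blkset_def by auto
  then have gv: "good \<alpha> \<beta> v" using good_cong by blast
  have "(v,w) \<in> simrel \<alpha> \<beta> \<longleftrightarrow> (u,w) \<in> simrel \<alpha> \<beta>" for w
    using uv simrel_sym simrel_trans by metis
  then show ?thesis using blkset_good[OF u uv(2)] blkset_good[OF uv(3) gv] by simp
qed

lemma blk_range: assumes a: "\<alpha> \<in> Pn n" and b: "\<beta> \<in> Pn n" and B: "B \<in> embL \<alpha> \<union> embR \<beta>" and w: "w \<in> B"
  shows "1 \<le> fst w \<and> fst w \<le> n \<and> snd w \<le> 2"
proof -
  have r: "\<And>L p. L \<subseteq> Xs n \<union> Xp n \<Longrightarrow> p \<in> L \<Longrightarrow> 1 \<le> fst p \<and> fst p \<le> n"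
  proof -
    fix L p assume "L \<subseteq> Xs n \<union> Xp n" "p \<in> L"
    then have "p \<in> Xs n \<union> Xp n" by blast
    then show "1 \<le> fst p \<and> fst p \<le> n" by (cases p) auto
  qed
  from B show ?thesis
  proof
    assume "B \<in> embL \<alpha>"
    then obtain L p where "L \<in> \<alpha>" "p \<in> L" "w = fL p" using w unfolding embL_eq by blast
    then show ?thesis using r[OF PnD(2)[OF a]] unfolding fL_def by auto
  next
    assume "B \<in> embR \<beta>"
    then obtain L p where "L \<in> \<beta>" "p \<in> L" "w = fR p" using w unfolding embR_eq by blast
    then show ?thesis using r[OF PnD(2)[OF b]] unfolding fR_def by auto
  qed
qed

lemma simrel_range: assumes a: "\<alpha> \<in> Pn n" and b: "\<beta> \<in> Pn n" and r: "(u,v) \<in> simrel \<alpha> \<beta>" and ne: "u \<noteq> v"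
  shows "1 \<le> fst v \<and> fst v \<le> n \<and> snd v \<le> 2"
proof -
  from r[unfolded simrel_R0] ne obtain y where "(y,v) \<in> R0 \<alpha> \<beta>"
    by (metis rtranclE)
  then obtain B where "B \<in> embL \<alpha> \<union> embR \<beta>" "v \<in> B" unfolding R0_def by blast
  then show ?thesis using blk_range[OF a b] by blast
qed

lemma img_mem: "f x = y \<Longrightarrow> x \<in> L \<Longrightarrow> y \<in> f ` L" by blast

lemma gline_get_top: "is_gline n L \<Longrightarrow> \<exists>j. (j,False) \<in> L \<and> 1 \<le> j \<and> j \<le> n"
  unfolding gline_iff by (auto simp: topp_def)
lemma gline_get_bot: "is_gline n L \<Longrightarrow> \<exists>j. (j,True) \<in> L \<and> 1 \<le> j \<and> j \<le> n"
  unfolding gline_iff by (auto simp: botp_def)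

lemma good_gline:
  assumes a: "\<alpha> \<in> Pn n" and b: "\<beta> \<in> Pn n" and u: "u \<in> outset n" and g: "good \<alpha> \<beta> u"
  shows "is_gline n (outpt ` blkset n \<alpha> \<beta> u)"
proof -
  have bs: "blkset n \<alpha> \<beta> u = {v \<in> outset n. (u,v) \<in> simrel \<alpha> \<beta>}" using blkset_good[OF u g] .
  obtain i k where uik: "u = (i,k)" by (cases u)
  have i: "1 \<le> i" "i \<le> n" and k: "k = 0 \<or> k = 2" using u uik unfolding mem_outset by auto
  have inbs: "(u,v) \<in> simrel \<alpha> \<beta> \<Longrightarrow> v \<in> outset n \<Longrightarrow> outpt v \<in> outpt ` blkset n \<alpha> \<beta> u" for v
    using bs by blast
  have uin: "outpt u \<in> outpt ` blkset n \<alpha> \<beta> u" using inbs[OF simrel_refl u] .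
  from k show ?thesis
  proof
    assume k0: "k = 0"
    have "(i,False) \<in> Xs n \<union> Xp n" using i by simp
    then obtain L where L: "L \<in> \<alpha>" "(i,False) \<in> L" using PnD(1)[OF a] by blast
    have BL: "fL ` L \<in> embL \<alpha> \<union> embR \<beta>" using L unfolding embL_eq by blast
    have uL: "u \<in> fL ` L" using img_mem[of fL "(i,False)" u, OF _ L(2)] uik k0 by simp
    have "\<not> is_point (fL ` L)" using good_step(1)[OF g BL uL simrel_refl] .
    then have "\<not> is_point L" using point_inj_img[OF fL_inj] by blast
    then have "is_gline n L" using PnD(5)[OF a L(1)] by blast
    then obtain j where j: "(j,True) \<in> L" "1 \<le> j" "j \<le> n" using gline_get_bot by blast
    have jL: "(j,1) \<in> fL ` L" using img_mem[of fL "(j,True)" "(j,1)", OF _ j(1)] by simp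
    have uj: "(u,(j,1)) \<in> simrel \<alpha> \<beta>" using good_step(2)[OF g BL uL simrel_refl jL] .
    have "(j,False) \<in> Xs n \<union> Xp n" using j by simp
    then obtain M where M: "M \<in> \<beta>" "(j,False) \<in> M" using PnD(1)[OF b] by blast
    have BM: "fR ` M \<in> embL \<alpha> \<union> embR \<beta>" using M unfolding embR_eq by blast
    have jM: "(j,1) \<in> fR ` M" using img_mem[of fR "(j,False)" "(j,1)", OF _ M(2)] by simp
    have "\<not> is_point (fR ` M)" using good_step(1)[OF g BM jM uj] .
    then have "\<not> is_point M" using point_inj_img[OF fR_inj] by blast
    then have "is_gline n M" using PnD(5)[OF b M(1)] by blast
    then obtain m where m: "(m,True) \<in> M" "1 \<le> m" "m \<le> n" using gline_get_bot by blast
    have mM: "(m,2) \<in> fR ` M" using img_mem[of fR "(m,True)" "(m,2)", OF _ m(1)] by simp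
    have um: "(u,(m,2)) \<in> simrel \<alpha> \<beta>" using good_step(2)[OF g BM jM uj mM] .
    have "(m,2) \<in> outset n" using m unfolding mem_outset by auto
    then have "outpt (m,2) \<in> outpt ` blkset n \<alpha> \<beta> u" using inbs[OF um] by blast
    then have 1: "(m,True) \<in> outpt ` blkset n \<alpha> \<beta> u" unfolding outpt_def by simp
    have 2: "(i,False) \<in> outpt ` blkset n \<alpha> \<beta> u" using uin uik k0 unfolding outpt_def by simp
    have "(m,True) \<in> Xp n" "(i,False) \<in> Xs n" using i m by simp_all
    then show ?thesis unfolding is_gline_def using 1 2 by blast
  next
    assume k2: "k = 2"
    have "(i,True) \<in> Xs n \<union> Xp n" using i by simp
    then obtain M where M: "M \<in> \<beta>" "(i,True) \<in> M" using PnD(1)[OF b] by blast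
    have BM: "fR ` M \<in> embL \<alpha> \<union> embR \<beta>" using M unfolding embR_eq by blast
    have uM: "u \<in> fR ` M" using img_mem[of fR "(i,True)" u, OF _ M(2)] uik k2 by simp
    have "\<not> is_point (fR ` M)" using good_step(1)[OF g BM uM simrel_refl] .
    then have "\<not> is_point M" using point_inj_img[OF fR_inj] by blast
    then have "is_gline n M" using PnD(5)[OF b M(1)] by blast
    then obtain j where j: "(j,False) \<in> M" "1 \<le> j" "j \<le> n" using gline_get_top by blast
    have jM: "(j,1) \<in> fR ` M" using img_mem[of fR "(j,False)" "(j,1)", OF _ j(1)] by simp
    have uj: "(u,(j,1)) \<in> simrel \<alpha> \<beta>" using good_step(2)[OF g BM uM simrel_refl jM] .
    have "(j,True) \<in> Xs n \<union> Xp n" using j by simp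
    then obtain L where L: "L \<in> \<alpha>" "(j,True) \<in> L" using PnD(1)[OF a] by blast
    have BL: "fL ` L \<in> embL \<alpha> \<union> embR \<beta>" using L unfolding embL_eq by blast
    have jL: "(j,1) \<in> fL ` L" using img_mem[of fL "(j,True)" "(j,1)", OF _ L(2)] by simp
    have "\<not> is_point (fL ` L)" using good_step(1)[OF g BL jL uj] .
    then have "\<not> is_point L" using point_inj_img[OF fL_inj] by blast
    then have "is_gline n L" using PnD(5)[OF a L(1)] by blast
    then obtain m where m: "(m,False) \<in> L" "1 \<le> m" "m \<le> n" using gline_get_top by blast
    have mL: "(m,0) \<in> fL ` L" using img_mem[of fL "(m,False)" "(m,0)", OF _ m(1)] by simp
    have um: "(u,(m,0)) \<in> simrel \<alpha> \<beta>" using good_step(2)[OF g BL jL uj mL] .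
    have "(m,0) \<in> outset n" using m unfolding mem_outset by auto
    then have "outpt (m,0) \<in> outpt ` blkset n \<alpha> \<beta> u" using inbs[OF um] by blast
    then have 1: "(m,False) \<in> outpt ` blkset n \<alpha> \<beta> u" unfolding outpt_def by simp
    have 2: "(i,True) \<in> outpt ` blkset n \<alpha> \<beta> u" using uin uik k2 unfolding outpt_def by simp
    have "(m,False) \<in> Xs n" "(i,True) \<in> Xp n" using i m by simp_all
    then show ?thesis unfolding is_gline_def using 1 2 by blast
  qed
qed

lemma blkset_sub: "blkset n \<alpha> \<beta> u \<subseteq> outset n" unfolding blkset_def by auto
lemma blkset_self: "u \<in> outset n \<Longrightarrow> u \<in> blkset n \<alpha> \<beta> u" unfolding blkset_def by auto

lemma PIstar_mem: "L \<in> PIstar n \<alpha> \<beta> \<longleftrightarrow> (\<exists>u\<in>outset n. L = outpt ` blkset n \<alpha> \<beta> u)"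
  unfolding PIstar_eq by blast

lemma PIstar_Pn: assumes a: "\<alpha> \<in> Pn n" and b: "\<beta> \<in> Pn n" shows "PIstar n \<alpha> \<beta> \<in> Pn n"
proof (rule PnI)
  show "\<Union>(PIstar n \<alpha> \<beta>) = Xs n \<union> Xp n"
  proof
    show "\<Union>(PIstar n \<alpha> \<beta>) \<subseteq> Xs n \<union> Xp n"
    proof
      fix p assume "p \<in> \<Union>(PIstar n \<alpha> \<beta>)"
      then obtain L where L: "L \<in> PIstar n \<alpha> \<beta>" "p \<in> L" by blast
      then obtain u where u: "u \<in> outset n" "L = outpt ` blkset n \<alpha> \<beta> u" using PIstar_mem by blast
      then obtain v where v: "v \<in> blkset n \<alpha> \<beta> u" "p = outpt v" using L(2) by blast
      then have "v \<in> outset n" using blkset_sub by blast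
      then show "p \<in> Xs n \<union> Xp n" using v(2) outpt_XsXp by simp
    qed
    show "Xs n \<union> Xp n \<subseteq> \<Union>(PIstar n \<alpha> \<beta>)"
    proof
      fix p assume "p \<in> Xs n \<union> Xp n"
      then have io: "inpt p \<in> outset n" "outpt (inpt p) = p" using inpt_outset by auto
      have "outpt ` blkset n \<alpha> \<beta> (inpt p) \<in> PIstar n \<alpha> \<beta>" using PIstar_mem io(1) by blast
      moreover have "p \<in> outpt ` blkset n \<alpha> \<beta> (inpt p)"
        using img_mem[of outpt "inpt p" p, OF io(2) blkset_self[OF io(1)]] .
      ultimately show "p \<in> \<Union>(PIstar n \<alpha> \<beta>)" by blast
    qed
  qed
  show "L = M" if LM: "L \<in> PIstar n \<alpha> \<beta>" "M \<in> PIstar n \<alpha> \<beta>" "x \<in> L" "x \<in> M" for L M x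
  proof -
    obtain u where u: "u \<in> outset n" "L = outpt ` blkset n \<alpha> \<beta> u" using LM(1) PIstar_mem by blast
    obtain u' where u': "u' \<in> outset n" "M = outpt ` blkset n \<alpha> \<beta> u'" using LM(2) PIstar_mem by blast
    obtain v where v: "v \<in> blkset n \<alpha> \<beta> u" "x = outpt v" using LM(3) u by blast
    obtain v' where v': "v' \<in> blkset n \<alpha> \<beta> u'" "x = outpt v'" using LM(4) u' by blast
    have "v \<in> outset n" "v' \<in> outset n" using v(1) v'(1) blkset_sub by blast+
    then have "v = v'" using outpt_inj v(2) v'(2) by metis
    then show ?thesis using blkset_eq[OF u(1) v(1)] blkset_eq[OF u'(1) v'(1)] u u' by simp
  qed
  show "is_point L \<or> is_gline n L" if L: "L \<in> PIstar n \<alpha> \<beta>" for L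
  proof -
    obtain u where u: "u \<in> outset n" "L = outpt ` blkset n \<alpha> \<beta> u" using L PIstar_mem by blast
    show ?thesis
    proof (cases "good \<alpha> \<beta> u")
      case True then show ?thesis using good_gline[OF a b u(1)] u(2) by simp
    next
      case False then have "L = {outpt u}" using blkset_bad[OF u(1)] u(2) by simp
      then show ?thesis using single_point[of "outpt u"] by simp
    qed
  qed
qed



lemma gline_Qs: assumes a: "\<alpha> \<in> Pn n" and L: "L \<in> \<alpha>" and g: "is_gline n L"
  shows "topp L \<in> Qs n" "botp L \<in> Qs n"
proof -
  have sub: "L \<subseteq> Xs n \<union> Xp n" using PnD(2)[OF a L] .
  have r: "\<And>i b. (i,b) \<in> L \<Longrightarrow> 1 \<le> i \<and> i \<le> n" using sub mem_XsXp by blast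
  have "topp L \<subseteq> {1..n}" "botp L \<subseteq> {1..n}" using r by (auto simp: topp_def botp_def)
  moreover have "topp L \<noteq> {}" "botp L \<noteq> {}" using g unfolding gline_iff by auto
  ultimately show "topp L \<in> Qs n" "botp L \<in> Qs n" unfolding Qs_def by auto
qed

lemma gline_mk_eq: assumes a: "\<alpha> \<in> Pn n" and L: "L \<in> \<alpha>" "is_gline n L" and M: "M \<in> \<alpha>"
  and t: "topp L \<inter> topp M \<noteq> {} \<or> botp L \<inter> botp M \<noteq> {}" shows "L = M"
proof -
  obtain x where "x \<in> L" "x \<in> M" using t by auto
  then show ?thesis using PnD(4)[OF a L(1) M] by auto
qed

definition PhiB :: "nat \<Rightarrow> part \<Rightarrow> (nat set \<times> nat set) set" where
  "PhiB n \<alpha> = {(topp L, botp L) | L. L \<in> \<alpha> \<and> is_gline n L}"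

lemma PhiB_sub: "\<alpha> \<in> Pn n \<Longrightarrow> PhiB n \<alpha> \<subseteq> Qs n \<times> Qs n"
  unfolding PhiB_def using gline_Qs by blast

lemma PhiB_pinj: assumes a: "\<alpha> \<in> Pn n" shows "pinj (PhiB n \<alpha>)"
proof -
  have 1: "L = M" if "L \<in> \<alpha>" "is_gline n L" "M \<in> \<alpha>" "is_gline n M" "topp L = topp M" for L M
    using gline_mk_eq[OF a that(1,2,3)] that(2,5) unfolding gline_iff by auto
  have 2: "L = M" if "L \<in> \<alpha>" "is_gline n L" "M \<in> \<alpha>" "is_gline n M" "botp L = botp M" for L M
    using gline_mk_eq[OF a that(1,2,3)] that(2,5) unfolding gline_iff by auto
  show ?thesis unfolding pinj_def single_valued_def PhiB_def using 1 2 by auto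
qed

lemma PhiB_inj: "inj_on (PhiB n) (Pn n)"
proof (rule inj_onI)
  fix \<alpha> \<beta> assume a: "\<alpha> \<in> Pn n" and b: "\<beta> \<in> Pn n" and e: "PhiB n \<alpha> = PhiB n \<beta>"
  have gen: "L \<in> y" if "PhiB n x = PhiB n y" "L \<in> x" "is_gline n L" for x y L
  proof -
    have "(topp L, botp L) \<in> PhiB n x" unfolding PhiB_def using that(2,3) by blast
    then have "(topp L, botp L) \<in> PhiB n y" using that(1) by simp
    then obtain M where "M \<in> y" "topp L = topp M" "botp L = botp M" unfolding PhiB_def by auto
    then show ?thesis by (metis mkblk_tb)
  qed
  show "\<alpha> = \<beta>" using Pn_eqI[OF a b] gen e by metis
qed

lemma PhiB_single: assumes "A \<in> Qs n" "B \<in> Qs n" shows "PhiB n (sgl n A B) = {(A,B)}"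
proof
  show "PhiB n (sgl n A B) \<subseteq> {(A,B)}"
  proof
    fix p assume "p \<in> PhiB n (sgl n A B)"
    then obtain L where "p = (topp L, botp L)" "L \<in> sgl n A B" "is_gline n L" unfolding PhiB_def by blast
    then show "p \<in> {(A,B)}" using sgl_glines by (metis botp_mkblk singletonI topp_mkblk)
  qed
  have "mkblk A B \<in> sgl n A B" using sgl_mem by blast
  then have "(topp (mkblk A B), botp (mkblk A B)) \<in> PhiB n (sgl n A B)"
    unfolding PhiB_def using Qs_gline[OF assms] by blast
  then show "{(A,B)} \<subseteq> PhiB n (sgl n A B)" by simp
qed

lemma PhiB_trp: assumes a: "\<alpha> \<in> Pn n" shows "PhiB n (trp \<alpha>) = (PhiB n \<alpha>)\<inverse>"
proof -
  have tb: "topp (sw ` L) = botp L" "botp (sw ` L) = topp L" for L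
    using sw_mkblk[of "topp L" "botp L"] by simp_all
  show ?thesis
  proof
    show "PhiB n (trp \<alpha>) \<subseteq> (PhiB n \<alpha>)\<inverse>"
    proof
      fix p assume "p \<in> PhiB n (trp \<alpha>)"
      then obtain L where "p = (topp L, botp L)" "L \<in> trp \<alpha>" "is_gline n L" unfolding PhiB_def by blast
      moreover obtain L' where "L' \<in> \<alpha>" "L = sw ` L'" using calculation(2) unfolding trp_def by blast
      ultimately have "p = (botp L', topp L')" "is_gline n L'" "L' \<in> \<alpha>" using tb sw_gline by simp_all
      then show "p \<in> (PhiB n \<alpha>)\<inverse>" unfolding PhiB_def by blast
    qed
    show "(PhiB n \<alpha>)\<inverse> \<subseteq> PhiB n (trp \<alpha>)"
    proof
      fix p assume "p \<in> (PhiB n \<alpha>)\<inverse>"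
      then obtain L where "p = (botp L, topp L)" "L \<in> \<alpha>" "is_gline n L" unfolding PhiB_def by blast
      moreover have "sw ` L \<in> trp \<alpha>" using calculation unfolding trp_def by blast
      moreover have "is_gline n (sw ` L)" "p = (topp (sw ` L), botp (sw ` L))" using calculation tb sw_gline by simp_all
      ultimately show "p \<in> PhiB n (trp \<alpha>)" unfolding PhiB_def by blast
    qed
  qed
qed

lemma lines_circ_mem: "L \<in> lines_circ n \<alpha> \<beta> \<longleftrightarrow> (\<exists>La Lb. L = mkblk (topp La) (botp Lb) \<and>
   La \<in> \<alpha> \<and> is_gline n La \<and> Lb \<in> \<beta> \<and> is_gline n Lb \<and> botp La = topp Lb)"
  unfolding lines_circ_def by blast

lemma PIbar_mem: "L \<in> PIbar n \<alpha> \<beta> \<longleftrightarrow> L \<in> lines_circ n \<alpha> \<beta> \<or>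
   (\<exists>x. L = {x} \<and> x \<in> Xs n \<union> Xp n \<and> x \<notin> \<Union>(lines_circ n \<alpha> \<beta>))"
  unfolding PIbar_def by blast

lemma lines_gline: assumes a: "\<alpha> \<in> Pn n" and b: "\<beta> \<in> Pn n" and L: "L \<in> lines_circ n \<alpha> \<beta>"
  shows "is_gline n L" "L \<subseteq> Xs n \<union> Xp n"
proof -
  obtain La Lb where l: "L = mkblk (topp La) (botp Lb)" "La \<in> \<alpha>" "is_gline n La" "Lb \<in> \<beta>" "is_gline n Lb"
    using L lines_circ_mem by blast
  have "topp La \<in> Qs n" "botp Lb \<in> Qs n" using gline_Qs a b l by auto
  then show "is_gline n L" using l Qs_gline by simp
  have "topp La \<subseteq> {1..n}" "botp Lb \<subseteq> {1..n}" using \<open>topp La \<in> Qs n\<close> \<open>botp Lb \<in> Qs n\<close> unfolding Qs_def by auto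
  then show "L \<subseteq> Xs n \<union> Xp n" using l(1) mkblk_sub[of "topp La" "botp Lb" n] by simp
qed

lemma PIbar_glines: assumes a: "\<alpha> \<in> Pn n" and b: "\<beta> \<in> Pn n"
  shows "L \<in> PIbar n \<alpha> \<beta> \<and> is_gline n L \<longleftrightarrow> L \<in> lines_circ n \<alpha> \<beta>"
proof
  assume "L \<in> PIbar n \<alpha> \<beta> \<and> is_gline n L"
  then have d: "L \<in> lines_circ n \<alpha> \<beta> \<or> (\<exists>x. L = {x})" and g: "is_gline n L" using PIbar_mem by blast+
  show "L \<in> lines_circ n \<alpha> \<beta>"
  proof (rule ccontr)
    assume "L \<notin> lines_circ n \<alpha> \<beta>"
    then obtain x where "L = {x}" using d by blast
    then have "is_point L" using single_point by simp
    then show False using g point_not_gline by blast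
  qed
next
  assume "L \<in> lines_circ n \<alpha> \<beta>"
  then show "L \<in> PIbar n \<alpha> \<beta> \<and> is_gline n L" using PIbar_mem lines_gline[OF a b] by blast
qed

lemma PIbar_Pn: assumes a: "\<alpha> \<in> Pn n" and b: "\<beta> \<in> Pn n" shows "PIbar n \<alpha> \<beta> \<in> Pn n"
proof (rule PnI)
  show "\<Union>(PIbar n \<alpha> \<beta>) = Xs n \<union> Xp n"
  proof
    show "\<Union>(PIbar n \<alpha> \<beta>) \<subseteq> Xs n \<union> Xp n"
    proof
      fix x assume "x \<in> \<Union>(PIbar n \<alpha> \<beta>)"
      then obtain L where L: "L \<in> PIbar n \<alpha> \<beta>" "x \<in> L" by blast
      then show "x \<in> Xs n \<union> Xp n" using lines_gline[OF a b] PIbar_mem[of L] by blast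
    qed
    show "Xs n \<union> Xp n \<subseteq> \<Union>(PIbar n \<alpha> \<beta>)"
    proof
      fix x assume x: "x \<in> Xs n \<union> Xp n"
      show "x \<in> \<Union>(PIbar n \<alpha> \<beta>)"
      proof (cases "x \<in> \<Union>(lines_circ n \<alpha> \<beta>)")
        case True then show ?thesis unfolding PIbar_def by blast
      next
        case False then have "{x} \<in> PIbar n \<alpha> \<beta>" using x unfolding PIbar_def by blast
        then show ?thesis by blast
      qed
    qed
  qed
  show "L = M" if LM: "L \<in> PIbar n \<alpha> \<beta>" "M \<in> PIbar n \<alpha> \<beta>" "x \<in> L" "x \<in> M" for L M x
  proof -
    have ll: "L = M" if L: "L \<in> lines_circ n \<alpha> \<beta>" and M: "M \<in> lines_circ n \<alpha> \<beta>" and x: "x \<in> L" "x \<in> M" for L M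
    proof -
      obtain La Lb where l: "L = mkblk (topp La) (botp Lb)" "La \<in> \<alpha>" "is_gline n La" "Lb \<in> \<beta>" "is_gline n Lb" "botp La = topp Lb"
        using L lines_circ_mem by blast
      obtain Ma Mb where m: "M = mkblk (topp Ma) (botp Mb)" "Ma \<in> \<alpha>" "is_gline n Ma" "Mb \<in> \<beta>" "is_gline n Mb" "botp Ma = topp Mb"
        using M lines_circ_mem by blast
      obtain i b where xi: "x = (i,b)" by (cases x)
      show ?thesis
      proof (cases b)
        case True
        then have "i \<in> botp Lb" "i \<in> botp Mb" using x xi l m by auto
        then have LM: "Lb = Mb" using PnD(4)[OF b l(4) m(4), of "(i,True)"] by simp
        obtain j where "j \<in> botp La" using l(3) unfolding gline_iff by auto
        then have "(j,True) \<in> La" "(j,True) \<in> Ma" using l(6) m(6) LM by auto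
        then have "La = Ma" using PnD(4)[OF a l(2) m(2)] by simp
        then show ?thesis using l m LM by simp
      next
        case False
        then have "i \<in> topp La" "i \<in> topp Ma" using x xi l m by auto
        then have LM: "La = Ma" using PnD(4)[OF a l(2) m(2), of "(i,False)"] by simp
        obtain j where "j \<in> topp Lb" using l(5) unfolding gline_iff by auto
        then have "(j,False) \<in> Lb" "(j,False) \<in> Mb" using l(6) m(6) LM by auto
        then have "Lb = Mb" using PnD(4)[OF b l(4) m(4)] by simp
        then show ?thesis using l m LM by simp
      qed
    qed
    have l: "L \<in> lines_circ n \<alpha> \<beta> \<or> (\<exists>y. L = {y} \<and> y \<notin> \<Union>(lines_circ n \<alpha> \<beta>))" using LM(1) PIbar_mem by blast
    have m: "M \<in> lines_circ n \<alpha> \<beta> \<or> (\<exists>y. M = {y} \<and> y \<notin> \<Union>(lines_circ n \<alpha> \<beta>))" using LM(2) PIbar_mem by blast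
    show ?thesis using l m ll LM(3,4) by blast
  qed
  show "is_point L \<or> is_gline n L" if L: "L \<in> PIbar n \<alpha> \<beta>" for L
  proof -
    have "L \<in> lines_circ n \<alpha> \<beta> \<or> (\<exists>y. L = {y})" using L PIbar_mem by blast
    then show ?thesis using lines_gline[OF a b] single_point by metis
  qed
qed

lemma PhiB_hom: assumes a: "\<alpha> \<in> Pn n" and b: "\<beta> \<in> Pn n"
  shows "PhiB n (PIbar n \<alpha> \<beta>) = PhiB n \<alpha> O PhiB n \<beta>"
proof -
  have "PhiB n (PIbar n \<alpha> \<beta>) = {(topp L, botp L) | L. L \<in> lines_circ n \<alpha> \<beta>}"
    unfolding PhiB_def using PIbar_glines[OF a b] by blast
  also have "\<dots> = PhiB n \<alpha> O PhiB n \<beta>"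
  proof
    show "{(topp L, botp L) | L. L \<in> lines_circ n \<alpha> \<beta>} \<subseteq> PhiB n \<alpha> O PhiB n \<beta>"
    proof
      fix p assume "p \<in> {(topp L, botp L) | L. L \<in> lines_circ n \<alpha> \<beta>}"
      then obtain L where "p = (topp L, botp L)" "L \<in> lines_circ n \<alpha> \<beta>" by blast
      then obtain La Lb where l: "p = (topp La, botp Lb)" "La \<in> \<alpha>" "is_gline n La" "Lb \<in> \<beta>" "is_gline n Lb" "botp La = topp Lb"
        using lines_circ_mem[of L] by auto
      have "(topp La, botp La) \<in> PhiB n \<alpha>" "(topp Lb, botp Lb) \<in> PhiB n \<beta>" using l unfolding PhiB_def by auto
      then show "p \<in> PhiB n \<alpha> O PhiB n \<beta>" using l by auto
    qed
    show "PhiB n \<alpha> O PhiB n \<beta> \<subseteq> {(topp L, botp L) | L. L \<in> lines_circ n \<alpha> \<beta>}"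
    proof
      fix p assume "p \<in> PhiB n \<alpha> O PhiB n \<beta>"
      then obtain La Lb where l: "p = (topp La, botp Lb)" "La \<in> \<alpha>" "is_gline n La" "Lb \<in> \<beta>" "is_gline n Lb" "botp La = topp Lb"
        unfolding PhiB_def by auto
      then have "mkblk (topp La) (botp Lb) \<in> lines_circ n \<alpha> \<beta>" using lines_circ_mem by blast
      then show "p \<in> {(topp L, botp L) | L. L \<in> lines_circ n \<alpha> \<beta>}" using l(1)
        by (metis (mono_tags, lifting) botp_mkblk mem_Collect_eq topp_mkblk)
    qed
  qed
  finally show ?thesis .
qed

lemma PS_bar: "n \<ge> 2 \<Longrightarrow> PS n (PIbar n) (PhiB n)"
  apply (unfold_locales)
  apply (auto simp: PhiB_sub PhiB_pinj PhiB_inj PIbar_Pn PhiB_hom)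
  apply (metis trp_Pn PhiB_trp)
  by (metis sgl_Pn PhiB_single)



definition sat :: "nat \<Rightarrow> part \<Rightarrow> pt set \<Rightarrow> bool" where
  "sat n \<gamma> S \<longleftrightarrow> S \<subseteq> Xs n \<union> Xp n \<and> (\<forall>L\<in>\<gamma>. L \<inter> S \<noteq> {} \<longrightarrow> L \<subseteq> S \<and> is_gline n L)"

definition PhiS :: "nat \<Rightarrow> part \<Rightarrow> (nat set \<times> nat set) set" where
  "PhiS n \<gamma> = {(A,B). A \<noteq> {} \<and> sat n \<gamma> (mkblk A B)}"

lemma satD: "sat n \<gamma> S \<Longrightarrow> L \<in> \<gamma> \<Longrightarrow> x \<in> L \<Longrightarrow> x \<in> S \<Longrightarrow> L \<subseteq> S \<and> is_gline n L"
  unfolding sat_def by blast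

lemma sat_cover: assumes g: "\<gamma> \<in> Pn n" and s: "sat n \<gamma> S" and x: "x \<in> S"
  shows "\<exists>L\<in>\<gamma>. x \<in> L \<and> L \<subseteq> S \<and> is_gline n L"
proof -
  have "x \<in> Xs n \<union> Xp n" using s x unfolding sat_def by blast
  then obtain L where "L \<in> \<gamma>" "x \<in> L" using PnD(1)[OF g] by blast
  then show ?thesis using satD[OF s _ _ x] by blast
qed

lemma sat_bot: assumes g: "\<gamma> \<in> Pn n" and s: "sat n \<gamma> (mkblk A B)" and A: "A \<noteq> {}" shows "B \<noteq> {}"
proof -
  obtain a where "a \<in> A" using A by blast
  then have "(a,False) \<in> mkblk A B" by simp
  then obtain L where L: "L \<in> \<gamma>" "L \<subseteq> mkblk A B" "is_gline n L" using sat_cover[OF g s] by blast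
  then obtain j where "(j,True) \<in> L" using gline_get_bot by blast
  then have "(j,True) \<in> mkblk A B" using L(2) by blast
  then show ?thesis by auto
qed

lemma sat_top: assumes g: "\<gamma> \<in> Pn n" and s: "sat n \<gamma> (mkblk A B)" and B: "B \<noteq> {}" shows "A \<noteq> {}"
proof -
  obtain a where "a \<in> B" using B by blast
  then have "(a,True) \<in> mkblk A B" by simp
  then obtain L where L: "L \<in> \<gamma>" "L \<subseteq> mkblk A B" "is_gline n L" using sat_cover[OF g s] by blast
  then obtain j where "(j,False) \<in> L" using gline_get_top by blast
  then have "(j,False) \<in> mkblk A B" using L(2) by blast
  then show ?thesis by auto
qed

lemma sat_B: assumes g: "\<gamma> \<in> Pn n" and s: "sat n \<gamma> (mkblk A B)" and s': "sat n \<gamma> (mkblk A B')" shows "B \<subseteq> B'"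
proof
  fix j assume "j \<in> B"
  then have "(j,True) \<in> mkblk A B" by simp
  then obtain L where L: "L \<in> \<gamma>" "(j,True) \<in> L" "L \<subseteq> mkblk A B" "is_gline n L" using sat_cover[OF g s] by blast
  then obtain i where i: "(i,False) \<in> L" using gline_get_top by blast
  then have "(i,False) \<in> mkblk A B" using L(3) by blast
  then have "(i,False) \<in> mkblk A B'" by simp
  then have "L \<subseteq> mkblk A B'" using satD[OF s' L(1) i] by blast
  then have "(j,True) \<in> mkblk A B'" using L(2) by blast
  then show "j \<in> B'" by simp
qed

lemma sat_A: assumes g: "\<gamma> \<in> Pn n" and s: "sat n \<gamma> (mkblk A B)" and s': "sat n \<gamma> (mkblk A' B)" shows "A \<subseteq> A'"
proof
  fix j assume "j \<in> A"
  then have "(j,False) \<in> mkblk A B" by simp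
  then obtain L where L: "L \<in> \<gamma>" "(j,False) \<in> L" "L \<subseteq> mkblk A B" "is_gline n L" using sat_cover[OF g s] by blast
  then obtain i where i: "(i,True) \<in> L" using gline_get_bot by blast
  then have "(i,True) \<in> mkblk A B" using L(3) by blast
  then have "(i,True) \<in> mkblk A' B" by simp
  then have "L \<subseteq> mkblk A' B" using satD[OF s' L(1) i] by blast
  then have "(j,False) \<in> mkblk A' B" using L(2) by blast
  then show "j \<in> A'" by simp
qed

lemma PhiS_sub: assumes g: "\<gamma> \<in> Pn n" shows "PhiS n \<gamma> \<subseteq> Qs n \<times> Qs n"
proof
  fix p assume "p \<in> PhiS n \<gamma>"
  then obtain A B where p: "p = (A,B)" "A \<noteq> {}" "sat n \<gamma> (mkblk A B)" unfolding PhiS_def by blast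
  then have "B \<noteq> {}" using sat_bot[OF g] by blast
  moreover have "mkblk A B \<subseteq> Xs n \<union> Xp n" using p(3) unfolding sat_def by blast
  then have "A \<subseteq> {1..n}" "B \<subseteq> {1..n}" using mkblk_sub by blast+
  ultimately show "p \<in> Qs n \<times> Qs n" using p unfolding Qs_def by auto
qed

lemma PhiS_pinj: assumes g: "\<gamma> \<in> Pn n" shows "pinj (PhiS n \<gamma>)"
proof -
  have 1: "B = B'" if "sat n \<gamma> (mkblk A B)" "sat n \<gamma> (mkblk A B')" for A B B'
    using sat_B[OF g that] sat_B[OF g that(2,1)] by blast
  have 2: "A = A'" if "sat n \<gamma> (mkblk A B)" "sat n \<gamma> (mkblk A' B)" for A A' B
    using sat_A[OF g that] sat_A[OF g that(2,1)] by blast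
  show ?thesis unfolding pinj_def single_valued_def PhiS_def
    by (simp add: converse_def) (metis 1 2)
qed

lemma gline_sat: assumes g: "\<gamma> \<in> Pn n" and L: "L \<in> \<gamma>" "is_gline n L" shows "(topp L, botp L) \<in> PhiS n \<gamma>"
proof -
  have "topp L \<noteq> {}" using L(2) unfolding gline_iff by auto
  moreover have "sat n \<gamma> L" unfolding sat_def using PnD(2,4)[OF g] L by blast
  ultimately show ?thesis unfolding PhiS_def by simp
qed

lemma PhiS_inj: "inj_on (PhiS n) (Pn n)"
proof (rule inj_onI)
  fix \<alpha> \<beta> assume a: "\<alpha> \<in> Pn n" and b: "\<beta> \<in> Pn n" and e: "PhiS n \<alpha> = PhiS n \<beta>"
  have gen: "L \<in> y" if x: "x \<in> Pn n" and y: "y \<in> Pn n" and e: "PhiS n x = PhiS n y" and L: "L \<in> x" "is_gline n L" for x y L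
  proof -
    have "(topp L, botp L) \<in> PhiS n y" using gline_sat[OF x L] e by simp
    then have sy: "sat n y L" unfolding PhiS_def by simp
    obtain p where p: "p \<in> L" using L(2) unfolding is_gline_def by blast
    then obtain M where M: "M \<in> y" "p \<in> M" "M \<subseteq> L" "is_gline n M" using sat_cover[OF y sy] by blast
    have "(topp M, botp M) \<in> PhiS n x" using gline_sat[OF y M(1,4)] e by simp
    then have "sat n x M" unfolding PhiS_def by simp
    then have "L \<subseteq> M" using satD[OF _ L(1) p M(2)] by blast
    then show ?thesis using M by auto
  qed
  show "\<alpha> = \<beta>" using Pn_eqI[OF a b] gen[OF a b e] gen[OF b a e[symmetric]] by blast
qed

lemma PhiS_single: assumes A: "A \<in> Qs n" and B: "B \<in> Qs n" shows "PhiS n (sgl n A B) = {(A,B)}"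
proof
  have sP: "sgl n A B \<in> Pn n" using sgl_Pn[OF A B] .
  have mk: "mkblk A B \<in> sgl n A B" using sgl_mem by blast
  show "{(A,B)} \<subseteq> PhiS n (sgl n A B)"
    using gline_sat[OF sP mk Qs_gline[OF A B]] by simp
  show "PhiS n (sgl n A B) \<subseteq> {(A,B)}"
  proof
    fix p assume "p \<in> PhiS n (sgl n A B)"
    then obtain C D where p: "p = (C,D)" "C \<noteq> {}" "sat n (sgl n A B) (mkblk C D)" unfolding PhiS_def by blast
    obtain c where "c \<in> C" using p(2) by blast
    then have "(c,False) \<in> mkblk C D" by simp
    then obtain L where L: "L \<in> sgl n A B" "L \<subseteq> mkblk C D" "is_gline n L" using sat_cover[OF sP p(3)] by blast
    then have 1: "mkblk A B \<subseteq> mkblk C D" using sgl_glines by blast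
    have 2: "mkblk C D \<subseteq> mkblk A B"
    proof
      fix x assume "x \<in> mkblk C D"
      then obtain L where L: "L \<in> sgl n A B" "x \<in> L" "is_gline n L" using sat_cover[OF sP p(3)] by blast
      then show "x \<in> mkblk A B" using sgl_glines by blast
    qed
    have "mkblk C D = mkblk A B" using 1 2 by blast
    then show "p \<in> {(A,B)}" using p(1) mkblk_inj by blast
  qed
qed

lemma sat_trp: assumes g: "\<gamma> \<in> Pn n" shows "sat n (trp \<gamma>) (sw ` S) \<longleftrightarrow> sat n \<gamma> S"
proof -
  have 1: "sw ` S \<subseteq> Xs n \<union> Xp n \<longleftrightarrow> S \<subseteq> Xs n \<union> Xp n"
  proof -
    have "S \<subseteq> Xs n \<union> Xp n \<longleftrightarrow> sw ` S \<subseteq> sw ` (Xs n \<union> Xp n)" using inj_image_subset_iff[OF sw_inj] by blast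
    then show ?thesis using sw_XsXp by simp
  qed
  have 2: "sw ` L \<inter> sw ` S \<noteq> {} \<longleftrightarrow> L \<inter> S \<noteq> {}" for L
    using image_Int[OF sw_inj, of L S] by (metis image_is_empty)
  have 3: "sw ` L \<subseteq> sw ` S \<longleftrightarrow> L \<subseteq> S" for L
    using inj_image_subset_iff[OF sw_inj] by blast
  have 4: "(\<forall>L\<in>trp \<gamma>. P L) \<longleftrightarrow> (\<forall>L\<in>\<gamma>. P (sw ` L))" for P unfolding trp_def by blast
  show ?thesis unfolding sat_def 4 1 2 3 sw_gline by (rule refl)
qed

lemma PhiS_trp: assumes g: "\<gamma> \<in> Pn n" shows "PhiS n (trp \<gamma>) = (PhiS n \<gamma>)\<inverse>"
proof -
  have tg: "trp \<gamma> \<in> Pn n" using trp_Pn[OF g] .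
  have "(A,B) \<in> PhiS n (trp \<gamma>) \<longleftrightarrow> (B,A) \<in> PhiS n \<gamma>" for A B
  proof -
    have e: "sat n (trp \<gamma>) (mkblk A B) \<longleftrightarrow> sat n \<gamma> (mkblk B A)"
      using sat_trp[OF g, of "mkblk B A"] sw_mkblk[of B A] by simp
    show ?thesis unfolding PhiS_def using e sat_bot[OF g, of B A] sat_top[OF g, of B A] by blast
  qed
  then show ?thesis by auto
qed



definition lay :: "nat set \<Rightarrow> nat set \<Rightarrow> nat set \<Rightarrow> (nat \<times> nat) set" where
  "lay A B D = {(i,k). (k = 0 \<and> i \<in> A) \<or> (k = 1 \<and> i \<in> B) \<or> (k = 2 \<and> i \<in> D)}"

lemma mem_lay: "(i,k) \<in> lay A B D \<longleftrightarrow> (k = 0 \<and> i \<in> A) \<or> (k = 1 \<and> i \<in> B) \<or> (k = 2 \<and> i \<in> D)"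
  unfolding lay_def by simp

lemma fL_lay: "fL p \<in> lay A B D \<longleftrightarrow> p \<in> mkblk A B"
  by (cases p) (auto simp: mem_lay)
lemma fR_lay: "fR p \<in> lay A B D \<longleftrightarrow> p \<in> mkblk B D"
  by (cases p) (auto simp: mem_lay)
lemma outpt_lay: "v \<in> outset n \<Longrightarrow> outpt v \<in> mkblk A D \<longleftrightarrow> v \<in> lay A B D"
  unfolding mem_outset outpt_def by (cases v) (auto simp: mem_lay)

lemma img_sub_lay_L: "fL ` L \<subseteq> lay A B D \<longleftrightarrow> L \<subseteq> mkblk A B"
  using fL_lay by blast
lemma img_sub_lay_R: "fR ` L \<subseteq> lay A B D \<longleftrightarrow> L \<subseteq> mkblk B D"
  using fR_lay by blast

lemma hom_back:
  assumes a: "\<alpha> \<in> Pn n" and b: "\<beta> \<in> Pn n" and AB: "(A,B) \<in> PhiS n \<alpha>" and BD: "(B,D) \<in> PhiS n \<beta>"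
  shows "(A,D) \<in> PhiS n (PIstar n \<alpha> \<beta>)"
proof -
  let ?S = "lay A B D"
  have sA: "sat n \<alpha> (mkblk A B)" and Ane: "A \<noteq> {}" using AB unfolding PhiS_def by auto
  have sB: "sat n \<beta> (mkblk B D)" using BD unfolding PhiS_def by auto
  have AQ: "A \<in> Qs n" and DQ: "D \<in> Qs n" using PhiS_sub[OF a] AB PhiS_sub[OF b] BD by auto
  have cl: "Bk \<subseteq> ?S \<and> \<not> is_point Bk" if Bk: "Bk \<in> embL \<alpha> \<union> embR \<beta>" and m: "Bk \<inter> ?S \<noteq> {}" for Bk
  proof -
    from Bk show ?thesis
    proof
      assume "Bk \<in> embL \<alpha>"
      then obtain L where L: "L \<in> \<alpha>" "Bk = fL ` L" unfolding embL_eq by blast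
      then obtain p where p: "p \<in> L" "fL p \<in> ?S" using m by blast
      then have "p \<in> mkblk A B" using fL_lay by blast
      then have "L \<subseteq> mkblk A B \<and> is_gline n L" using satD[OF sA L(1) p(1)] by blast
      then show ?thesis using L(2) img_sub_lay_L point_inj_img[OF fL_inj] gline_not_point by metis
    next
      assume "Bk \<in> embR \<beta>"
      then obtain L where L: "L \<in> \<beta>" "Bk = fR ` L" unfolding embR_eq by blast
      then obtain p where p: "p \<in> L" "fR p \<in> ?S" using m by blast
      then have "p \<in> mkblk B D" using fR_lay by blast
      then have "L \<subseteq> mkblk B D \<and> is_gline n L" using satD[OF sB L(1) p(1)] by blast
      then show ?thesis using L(2) img_sub_lay_R point_inj_img[OF fR_inj] gline_not_point by metis
    qed
  qed
  have clo: "v \<in> ?S" if "(u,v) \<in> simrel \<alpha> \<beta>" "u \<in> ?S" for u v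
    using simrel_closed[of \<alpha> \<beta> ?S, OF _ that] cl by blast
  have gS: "good \<alpha> \<beta> u" if u: "u \<in> ?S" for u
    unfolding good_def
  proof (intro ballI impI)
    fix Bk w assume Bk: "Bk \<in> embL \<alpha> \<union> embR \<beta>" and pt: "is_point Bk" and w: "w \<in> Bk"
    show "(u,w) \<notin> simrel \<alpha> \<beta>"
    proof
      assume "(u,w) \<in> simrel \<alpha> \<beta>"
      then have "w \<in> ?S" using clo u by blast
      then have "Bk \<inter> ?S \<noteq> {}" using w by blast
      then show False using cl[OF Bk] pt by blast
    qed
  qed
  have "sat n (PIstar n \<alpha> \<beta>) (mkblk A D)"
    unfolding sat_def
  proof (intro conjI ballI impI)
    show "mkblk A D \<subseteq> Xs n \<union> Xp n" using AQ DQ mkblk_sub unfolding Qs_def by blast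
    fix L assume L: "L \<in> PIstar n \<alpha> \<beta>" and m: "L \<inter> mkblk A D \<noteq> {}"
    obtain u where u: "u \<in> outset n" "L = outpt ` blkset n \<alpha> \<beta> u" using L PIstar_mem by blast
    obtain v where v: "v \<in> blkset n \<alpha> \<beta> u" "outpt v \<in> mkblk A D" using m u(2) by blast
    have vo: "v \<in> outset n" using v(1) blkset_sub by blast
    have vS: "v \<in> ?S" using outpt_lay[OF vo] v(2) by blast
    have uS: "u \<in> ?S"
    proof (cases "v = u")
      case True then show ?thesis using vS by simp
    next
      case False
      then have "(u,v) \<in> simrel \<alpha> \<beta>" using v(1) unfolding blkset_def by blast
      then show ?thesis using clo[OF simrel_sym vS] by blast
    qed
    have gu: "good \<alpha> \<beta> u" using gS[OF uS] .
    have bs: "blkset n \<alpha> \<beta> u = {v \<in> outset n. (u,v) \<in> simrel \<alpha> \<beta>}" using blkset_good[OF u(1) gu] .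
    show "L \<subseteq> mkblk A D"
    proof
      fix x assume "x \<in> L"
      then obtain w where w: "w \<in> outset n" "(u,w) \<in> simrel \<alpha> \<beta>" "x = outpt w" using u(2) bs by blast
      then have "w \<in> ?S" using clo uS by blast
      then show "x \<in> mkblk A D" using outpt_lay[OF w(1)] w(3) by blast
    qed
    show "is_gline n L" using good_gline[OF a b u(1) gu] u(2) by simp
  qed
  then show ?thesis unfolding PhiS_def using Ane by simp
qed

lemma hom_fwd:
  assumes a: "\<alpha> \<in> Pn n" and b: "\<beta> \<in> Pn n" and AD: "(A,D) \<in> PhiS n (PIstar n \<alpha> \<beta>)"
  shows "\<exists>B. (A,B) \<in> PhiS n \<alpha> \<and> (B,D) \<in> PhiS n \<beta>"
proof -
  have gP: "PIstar n \<alpha> \<beta> \<in> Pn n" using PIstar_Pn[OF a b] .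
  have sAD: "sat n (PIstar n \<alpha> \<beta>) (mkblk A D)" and Ane: "A \<noteq> {}" using AD unfolding PhiS_def by auto
  have AQ: "A \<in> Qs n" and DQ: "D \<in> Qs n" using PhiS_sub[OF gP] AD by auto
  define S0 where "S0 = lay A {} D"
  have S0o: "u \<in> outset n" if "u \<in> S0" for u
    using that AQ DQ unfolding S0_def Qs_def mem_outset by (cases u) (auto simp: mem_lay)
  have S0m: "outpt u \<in> mkblk A D" if "u \<in> S0" for u
    using outpt_lay[OF S0o[OF that]] that unfolding S0_def by blast
  have S0blk: "outpt ` blkset n \<alpha> \<beta> u \<subseteq> mkblk A D \<and> good \<alpha> \<beta> u" if u: "u \<in> S0" for u
  proof -
    have L: "outpt ` blkset n \<alpha> \<beta> u \<in> PIstar n \<alpha> \<beta>" using PIstar_mem S0o[OF u] by blast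
    have "outpt u \<in> outpt ` blkset n \<alpha> \<beta> u" using blkset_self[OF S0o[OF u]] by blast
    then have r: "outpt ` blkset n \<alpha> \<beta> u \<subseteq> mkblk A D \<and> is_gline n (outpt ` blkset n \<alpha> \<beta> u)"
      using satD[OF sAD L _ S0m[OF u]] by blast
    have "good \<alpha> \<beta> u"
    proof (rule ccontr)
      assume "\<not> good \<alpha> \<beta> u"
      then have "outpt ` blkset n \<alpha> \<beta> u = {outpt u}" using blkset_bad[OF S0o[OF u]] by simp
      then have "is_point (outpt ` blkset n \<alpha> \<beta> u)" using single_point[of "outpt u"] by simp
      then show False using r point_not_gline by blast
    qed
    then show ?thesis using r by blast
  qed
  define S3 where "S3 = {w. \<exists>u\<in>S0. (u,w) \<in> simrel \<alpha> \<beta>}"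
  define B where "B = {j. (j,1) \<in> S3}"
  have S3lay: "w \<in> lay A B D" if w: "w \<in> S3" for w
  proof -
    obtain u where u: "u \<in> S0" "(u,w) \<in> simrel \<alpha> \<beta>" using w unfolding S3_def by blast
    show ?thesis
    proof (cases "w = u")
      case True then show ?thesis using u(1) unfolding S0_def lay_def by auto
    next
      case False
      have rng: "1 \<le> fst w \<and> fst w \<le> n \<and> snd w \<le> 2" using simrel_range[OF a b u(2)] False by metis
      obtain j k where jk: "w = (j,k)" by (cases w)
      show ?thesis
      proof (cases "k = 1")
        case True then show ?thesis using w jk unfolding B_def by (simp add: mem_lay)
      next
        case False
        then have wo: "w \<in> outset n" using rng jk unfolding mem_outset by auto
        have gu: "good \<alpha> \<beta> u" using S0blk[OF u(1)] by blast
        have "w \<in> blkset n \<alpha> \<beta> u" using blkset_good[OF S0o[OF u(1)] gu] wo u(2) by blast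
        then have "outpt w \<in> mkblk A D" using S0blk[OF u(1)] by blast
        then show ?thesis using outpt_lay[OF wo] by blast
      qed
    qed
  qed
  have layS3: "w \<in> S3" if w: "w \<in> lay A B D" for w
  proof -
    obtain j k where jk: "w = (j,k)" by (cases w)
    show ?thesis
    proof (cases "k = 1")
      case True then show ?thesis using w jk unfolding B_def by (simp add: mem_lay)
    next
      case False
      then have "w \<in> S0" using w jk unfolding S0_def by (simp add: mem_lay)
      then show ?thesis unfolding S3_def using simrel_refl by blast
    qed
  qed
  have S3eq: "S3 = lay A B D" using S3lay layS3 by blast
  have cl: "Bk \<subseteq> lay A B D \<and> \<not> is_point Bk" if Bk: "Bk \<in> embL \<alpha> \<union> embR \<beta>" and m: "Bk \<inter> lay A B D \<noteq> {}" for Bk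
  proof -
    obtain w where w: "w \<in> Bk" "w \<in> S3" using m S3eq by blast
    obtain u where u: "u \<in> S0" "(u,w) \<in> simrel \<alpha> \<beta>" using w(2) unfolding S3_def by blast
    have gu: "good \<alpha> \<beta> u" using S0blk[OF u(1)] by blast
    have "\<not> is_point Bk" using good_step(1)[OF gu Bk w(1) u(2)] .
    moreover have "Bk \<subseteq> S3" using good_step(2)[OF gu Bk w(1) u(2)] u(1) unfolding S3_def by blast
    ultimately show ?thesis using S3eq by blast
  qed
  have Bn: "B \<subseteq> {1..n}"
  proof
    fix j assume "j \<in> B"
    then obtain u where u: "u \<in> S0" "(u,(j,1)) \<in> simrel \<alpha> \<beta>" unfolding B_def S3_def by blast
    have "u \<noteq> (j,1)" using S0o[OF u(1)] unfolding mem_outset by auto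
    then show "j \<in> {1..n}" using simrel_range[OF a b u(2)] by simp
  qed
  have An: "A \<subseteq> {1..n}" and Dn: "D \<subseteq> {1..n}" using AQ DQ unfolding Qs_def by auto
  have satA: "sat n \<alpha> (mkblk A B)"
    unfolding sat_def
  proof (intro conjI ballI impI)
    show "mkblk A B \<subseteq> Xs n \<union> Xp n" using An Bn mkblk_sub by blast
    fix L assume L: "L \<in> \<alpha>" and m: "L \<inter> mkblk A B \<noteq> {}"
    have Bk: "fL ` L \<in> embL \<alpha> \<union> embR \<beta>" using L unfolding embL_eq by blast
    obtain p where "p \<in> L" "p \<in> mkblk A B" using m by blast
    then have "fL p \<in> fL ` L \<inter> lay A B D" using fL_lay by blast
    then have r: "fL ` L \<subseteq> lay A B D \<and> \<not> is_point (fL ` L)" using cl[OF Bk] by blast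
    then show "L \<subseteq> mkblk A B" using img_sub_lay_L by blast
    have "\<not> is_point L" using r point_inj_img[OF fL_inj] by blast
    then show "is_gline n L" using PnD(5)[OF a L] by blast
  qed
  have satB: "sat n \<beta> (mkblk B D)"
    unfolding sat_def
  proof (intro conjI ballI impI)
    show "mkblk B D \<subseteq> Xs n \<union> Xp n" using Dn Bn mkblk_sub by blast
    fix L assume L: "L \<in> \<beta>" and m: "L \<inter> mkblk B D \<noteq> {}"
    have Bk: "fR ` L \<in> embL \<alpha> \<union> embR \<beta>" using L unfolding embR_eq by blast
    obtain p where "p \<in> L" "p \<in> mkblk B D" using m by blast
    then have "fR p \<in> fR ` L \<inter> lay A B D" using fR_lay by blast
    then have r: "fR ` L \<subseteq> lay A B D \<and> \<not> is_point (fR ` L)" using cl[OF Bk] by blast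
    then show "L \<subseteq> mkblk B D" using img_sub_lay_R by blast
    have "\<not> is_point L" using r point_inj_img[OF fR_inj] by blast
    then show "is_gline n L" using PnD(5)[OF b L] by blast
  qed
  have Bne: "B \<noteq> {}" using sat_bot[OF a satA Ane] .
  show ?thesis using satA satB Ane Bne unfolding PhiS_def by blast
qed

lemma PhiS_hom: assumes a: "\<alpha> \<in> Pn n" and b: "\<beta> \<in> Pn n"
  shows "PhiS n (PIstar n \<alpha> \<beta>) = PhiS n \<alpha> O PhiS n \<beta>"
proof
  show "PhiS n (PIstar n \<alpha> \<beta>) \<subseteq> PhiS n \<alpha> O PhiS n \<beta>"
  proof
    fix p assume p: "p \<in> PhiS n (PIstar n \<alpha> \<beta>)"
    obtain A D where AD: "p = (A,D)" by (cases p)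
    then show "p \<in> PhiS n \<alpha> O PhiS n \<beta>" using hom_fwd[OF a b] p by blast
  qed
  show "PhiS n \<alpha> O PhiS n \<beta> \<subseteq> PhiS n (PIstar n \<alpha> \<beta>)"
    using hom_back[OF a b] by blast
qed

lemma PS_star: "n \<ge> 2 \<Longrightarrow> PS n (PIstar n) (PhiS n)"
proof (unfold_locales)
  show "\<And>\<alpha>. \<alpha> \<in> Pn n \<Longrightarrow> PhiS n \<alpha> \<subseteq> Qs n \<times> Qs n" using PhiS_sub by blast
  show "\<And>\<alpha>. \<alpha> \<in> Pn n \<Longrightarrow> pinj (PhiS n \<alpha>)" using PhiS_pinj by blast
  show "inj_on (PhiS n) (Pn n)" using PhiS_inj .
  show "\<And>\<alpha> \<beta>. \<alpha> \<in> Pn n \<Longrightarrow> \<beta> \<in> Pn n \<Longrightarrow> PIstar n \<alpha> \<beta> \<in> Pn n" using PIstar_Pn by blast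
  show "\<And>\<alpha> \<beta>. \<alpha> \<in> Pn n \<Longrightarrow> \<beta> \<in> Pn n \<Longrightarrow> PhiS n (PIstar n \<alpha> \<beta>) = PhiS n \<alpha> O PhiS n \<beta>"
    using PhiS_hom by blast
  show "\<And>\<alpha>. \<alpha> \<in> Pn n \<Longrightarrow> \<exists>\<beta>\<in>Pn n. PhiS n \<beta> = (PhiS n \<alpha>)\<inverse>" using trp_Pn PhiS_trp by blast
  show "\<And>A B. A \<in> Qs n \<Longrightarrow> B \<in> Qs n \<Longrightarrow> \<exists>s\<in>Pn n. PhiS n s = {(A,B)}" using sgl_Pn PhiS_single by blast
qed


theorem mainTheorem17:
  fixes n :: nat and mult :: "part \<Rightarrow> part \<Rightarrow> part"
  assumes "n \<ge> 2"
    and "mult = PIstar n \<or> mult = PIbar n"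
  shows "\<exists>H. closed_inv_sub (Pn n) mult H
           \<and> inj_on (phi (Pn n) mult H) (Pn n)
           \<and> card (cosets (Pn n) mult H) = 2 ^ n - 1
           \<and> (\<forall>s\<in>Pn n. \<forall>t\<in>Pn n. phi (Pn n) mult H (mult s t) = phi (Pn n) mult H s O phi (Pn n) mult H t)
           \<and> (\<forall>K. closed_inv_sub (Pn n) mult K \<and> inj_on (phi (Pn n) mult K) (Pn n) \<longrightarrow>
                  card (cosets (Pn n) mult K) = 2 ^ n - 1 \<and> rep_equiv (Pn n) mult H K)"
proof -
  from assms(2) show ?thesis
  proof
    assume "mult = PIstar n"
    then show ?thesis using PS.main_abs[OF PS_star[OF assms(1)]] by simp
  next
    assume "mult = PIbar n"
    then show ?thesis using PS.main_abs[OF PS_bar[OF assms(1)]] by simp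
  qed
qed

end
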